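(* Fix $m\ge1$, $\omega\in\mathbb Z\setminus\{0\}$, $\kappa=2\pi\omega$, and $$\mu_{m,\omega}:=(2\pi)^{2m+4}\min_{n\in\mathbb Z\setminus\{0,\pm\omega\}}|n|^{2m}(n^2-\omega^2)^2>0.$$ There are constants $C_{m,\omega}$ and $C_{m,r,\omega}$ such that for every smooth closed unit-length immersed planar curve with turning number $\omega$, writing $f=k-\kappa$ (as a function of arclength $s\in\mathbb R/\mathbb Z$), $e=\int_0^1f^2ds$, $D=\partial_s$ and $\mathfrak D_m[f]=\int_0^1\big(D^m(D^2+\kappa^2)f\big)^2ds$, one has $$\mathfrak D_m[f]\ge\mu_{m,\omega}e-C_{m,\omega}e^2,\qquad \|D^rf\|_{L^2}^2\le C_{m,r,\omega}\big(\mathfrak D_m[f]+e^2\big)\quad(0\le r\le m+2).$$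
   Context: $k$ is the signed curvature of the curve, and the turning number is $\frac1{2\pi}\int k\,ds$. *)

theory Defs
  imports "HOL-Analysis.Analysis"
begin

fun vderiv :: "nat \<Rightarrow> (real \<Rightarrow> complex) \<Rightarrow> real \<Rightarrow> complex" where
  "vderiv 0 \<gamma> = \<gamma>"
| "vderiv (Suc n) \<gamma> = (\<lambda>t. vector_derivative (vderiv n \<gamma>) (at t))"

definition smooth_curve :: "(real \<Rightarrow> complex) \<Rightarrow> bool" where
  "smooth_curve \<gamma> \<longleftrightarrow> (\<forall>n t. vderiv n \<gamma> differentiable (at t))"

text \<open>Smooth closed immersed planar curve of length 1, parametrised by arclength
  s on R/Z (i.e. 1-periodic with unit speed).\<close>
definition unit_length_closed_curve :: "(real \<Rightarrow> complex) \<Rightarrow> bool" where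
  "unit_length_closed_curve \<gamma> \<longleftrightarrow>
     smooth_curve \<gamma> \<and> (\<forall>s. \<gamma> (s + 1) = \<gamma> s) \<and> (\<forall>s. norm (vderiv 1 \<gamma> s) = 1)"

text \<open>Signed curvature (general formula; equals Im(conj gamma' * gamma'') at unit speed).\<close>
definition signed_curvature :: "(real \<Rightarrow> complex) \<Rightarrow> real \<Rightarrow> real" where
  "signed_curvature \<gamma> s =
     Im (cnj (vderiv 1 \<gamma> s) * vderiv 2 \<gamma> s) / norm (vderiv 1 \<gamma> s) ^ 3"

definition turning_number :: "(real \<Rightarrow> complex) \<Rightarrow> real" where
  "turning_number \<gamma> = (1 / (2 * pi)) * integral {0..1} (signed_curvature \<gamma>)"

definition mu :: "nat \<Rightarrow> int \<Rightarrow> real" where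
  "mu m \<omega> = (2 * pi) ^ (2 * m + 4) *
     (INF n \<in> {n::int. n \<noteq> 0 \<and> n \<noteq> \<omega> \<and> n \<noteq> - \<omega>}.
        \<bar>real_of_int n\<bar> ^ (2 * m) * ((real_of_int n)\<^sup>2 - (real_of_int \<omega>)\<^sup>2)\<^sup>2)"

definition dissipation :: "nat \<Rightarrow> real \<Rightarrow> (real \<Rightarrow> real) \<Rightarrow> real" where
  "dissipation m \<kappa> f =
     integral {0..1} (\<lambda>s. ((deriv ^^ m) (\<lambda>t. (deriv ^^ 2) f t + \<kappa>\<^sup>2 * f t) s)\<^sup>2)"

end

theory Submission
  imports Defs "HOL-Probability.Characteristic_Functions"
begin

definition rsm :: "(real \<Rightarrow> real) \<Rightarrow> bool" where
  "rsm h \<longleftrightarrow> (\<forall>n x. (deriv ^^ n) h differentiable (at x))"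

lemma funpow_deriv_Suc: "(deriv ^^ Suc n) h = deriv ((deriv ^^ n) h)"
  by simp

lemma funpow_deriv_Suc': "(deriv ^^ Suc n) h = (deriv ^^ n) (deriv h)"
  by (simp add: funpow_Suc_right del: funpow.simps)

lemma rsm_DERIV: "rsm h \<Longrightarrow> ((deriv ^^ n) h has_real_derivative (deriv ^^ Suc n) h x) (at x)"
  unfolding rsm_def by (simp add: DERIV_deriv_iff_real_differentiable)

lemma rsm_deriv: "rsm h \<Longrightarrow> rsm (deriv h)"
  unfolding rsm_def by (metis funpow_deriv_Suc')

lemma rsm_funpow: "rsm h \<Longrightarrow> rsm ((deriv ^^ k) h)"
  by (induction k) (auto intro: rsm_deriv)

lemma rsm_cont: "rsm h \<Longrightarrow> continuous_on S ((deriv ^^ n) h)"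
  unfolding rsm_def by (intro continuous_at_imp_continuous_on ballI differentiable_imp_continuous_within) blast

lemma deriv_add_gen:
  fixes A B :: "real \<Rightarrow> real"
  assumes "\<And>k x. k < n \<Longrightarrow> (deriv ^^ k) A differentiable (at x)"
      and "\<And>k x. k < n \<Longrightarrow> (deriv ^^ k) B differentiable (at x)"
  shows "(deriv ^^ n) (\<lambda>x. A x + B x) = (\<lambda>x. (deriv ^^ n) A x + (deriv ^^ n) B x)"
  using assms
proof (induction n)
  case 0 then show ?case by simp
next
  case (Suc n)
  have IH: "(deriv ^^ n) (\<lambda>x. A x + B x) = (\<lambda>x. (deriv ^^ n) A x + (deriv ^^ n) B x)"
    using Suc by simp
  show ?case
  proof
    fix x
    have "((\<lambda>x. (deriv ^^ n) A x + (deriv ^^ n) B x) has_real_derivative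
           (deriv ^^ Suc n) A x + (deriv ^^ Suc n) B x) (at x)"
      using Suc.prems by (intro derivative_intros) (auto simp: DERIV_deriv_iff_real_differentiable)
    then show "(deriv ^^ Suc n) (\<lambda>x. A x + B x) x = (deriv ^^ Suc n) A x + (deriv ^^ Suc n) B x"
      unfolding funpow_deriv_Suc IH by (rule DERIV_imp_deriv)
  qed
qed

lemma deriv_cmult_gen:
  fixes A :: "real \<Rightarrow> real"
  assumes "\<And>k x. k < n \<Longrightarrow> (deriv ^^ k) A differentiable (at x)"
  shows "(deriv ^^ n) (\<lambda>x. c * A x) = (\<lambda>x. c * (deriv ^^ n) A x)"
  using assms
proof (induction n)
  case 0 then show ?case by simp
next
  case (Suc n)
  have IH: "(deriv ^^ n) (\<lambda>x. c * A x) = (\<lambda>x. c * (deriv ^^ n) A x)"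
    using Suc by simp
  show ?case
  proof
    fix x
    have "((\<lambda>x. c * (deriv ^^ n) A x) has_real_derivative c * (deriv ^^ Suc n) A x) (at x)"
      using Suc.prems by (intro DERIV_cmult) (auto simp: DERIV_deriv_iff_real_differentiable)
    then show "(deriv ^^ Suc n) (\<lambda>x. c * A x) x = c * (deriv ^^ Suc n) A x"
      unfolding funpow_deriv_Suc IH by (rule DERIV_imp_deriv)
  qed
qed

lemma rsm_add_eq: "rsm A \<Longrightarrow> rsm B \<Longrightarrow>
   (deriv ^^ n) (\<lambda>x. A x + B x) = (\<lambda>x. (deriv ^^ n) A x + (deriv ^^ n) B x)"
  by (rule deriv_add_gen) (auto simp: rsm_def)

lemma rsm_cmult_eq: "rsm A \<Longrightarrow> (deriv ^^ n) (\<lambda>x. c * A x) = (\<lambda>x. c * (deriv ^^ n) A x)"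
  by (rule deriv_cmult_gen) (auto simp: rsm_def)

lemma rsm_add: "rsm A \<Longrightarrow> rsm B \<Longrightarrow> rsm (\<lambda>x. A x + B x)"
  unfolding rsm_def
  by (subst rsm_add_eq[unfolded rsm_def], assumption+) (intro allI differentiable_add; blast)

lemma rsm_cmult: "rsm A \<Longrightarrow> rsm (\<lambda>x. c * A x)"
  unfolding rsm_def
  by (subst rsm_cmult_eq[unfolded rsm_def], assumption+) (intro allI differentiable_mult differentiable_const; blast)

lemma deriv_const_funpow: "(deriv ^^ Suc n) (\<lambda>x. c::real) = (\<lambda>x. 0)"
  by (induction n) (auto simp: funpow_deriv_Suc' simp del: funpow.simps)

lemma rsm_const: "rsm (\<lambda>x. c)"
  unfolding rsm_def
proof (intro allI)
  fix n x show "(deriv ^^ n) (\<lambda>x. c) differentiable at x"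
    by (cases n) (auto simp: deriv_const_funpow simp del: funpow.simps)
qed

lemma rsm_diff: "rsm A \<Longrightarrow> rsm B \<Longrightarrow> rsm (\<lambda>x. A x - B x)"
proof -
  assume a: "rsm A" "rsm B"
  have "rsm (\<lambda>x. A x + (-1) * B x)" by (intro rsm_add rsm_cmult a)
  then show ?thesis by simp
qed

lemma rsm_mult_aux:
  "\<forall>k\<le>n. \<forall>g h. rsm g \<longrightarrow> rsm h \<longrightarrow> (\<forall>x. (deriv ^^ k) (\<lambda>x. g x * h x) differentiable (at x))"
proof (induction n)
  case 0
  show ?case unfolding rsm_def
    by (auto intro!: differentiable_mult) (metis funpow_0)+
next
  case (Suc n)
  show ?case
  proof (intro allI impI)
    fix k g h x assume k: "k \<le> Suc n" and g: "rsm g" and h: "rsm h"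
    show "(deriv ^^ k) (\<lambda>x. g x * h x) differentiable at x"
    proof (cases "k \<le> n")
      case True then show ?thesis using Suc g h by blast
    next
      case False
      then have kk: "k = Suc n" using k by simp
      have dgh: "deriv (\<lambda>x. g x * h x) = (\<lambda>x. deriv g x * h x + g x * deriv h x)"
      proof
        fix x
        have "((\<lambda>x. g x * h x) has_real_derivative deriv g x * h x + g x * deriv h x) (at x)"
          using rsm_DERIV[OF g, of 0 x] rsm_DERIV[OF h, of 0 x]
          by (auto intro!: derivative_eq_intros)
        then show "deriv (\<lambda>x. g x * h x) x = deriv g x * h x + g x * deriv h x"
          by (rule DERIV_imp_deriv)
      qed
      have g': "rsm (deriv g)" and h': "rsm (deriv h)" using g h by (auto intro: rsm_deriv)
      have "(deriv ^^ n) (\<lambda>x. deriv g x * h x + g x * deriv h x)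
          = (\<lambda>x. (deriv ^^ n) (\<lambda>x. deriv g x * h x) x + (deriv ^^ n) (\<lambda>x. g x * deriv h x) x)"
        by (rule deriv_add_gen) (use Suc g h g' h' in auto)
      moreover have "(\<lambda>x. (deriv ^^ n) (\<lambda>x. deriv g x * h x) x + (deriv ^^ n) (\<lambda>x. g x * deriv h x) x)
              differentiable at x"
        using Suc g h g' h' by (intro differentiable_add) auto
      ultimately show ?thesis
        unfolding kk funpow_deriv_Suc' dgh by simp
    qed
  qed
qed

lemma rsm_mult: "rsm g \<Longrightarrow> rsm h \<Longrightarrow> rsm (\<lambda>x. g x * h x)"
  using rsm_mult_aux unfolding rsm_def by blast

lemma deriv_periodic:
  fixes h :: "real \<Rightarrow> real"
  assumes per: "\<And>s. h (s + 1) = h s" and d: "\<And>x. h differentiable (at x)"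
  shows "deriv h (s + 1) = deriv h s"
proof -
  have "(h has_real_derivative deriv h (s + 1)) (at (s + 1))"
    using d by (simp add: DERIV_deriv_iff_real_differentiable)
  then have "((\<lambda>t. h (t + 1)) has_real_derivative deriv h (s + 1)) (at s)"
    by (simp add: DERIV_shift)
  moreover have "(\<lambda>t. h (t + 1)) = h" using per by auto
  ultimately have "(h has_real_derivative deriv h (s + 1)) (at s)" by simp
  then have "deriv h s = deriv h (s + 1)" by (rule DERIV_imp_deriv)
  then show ?thesis by simp
qed

lemma rsm_periodic_funpow:
  assumes "rsm h" "\<And>s. h (s + 1) = h s"
  shows "(deriv ^^ n) h (s + 1) = (deriv ^^ n) h s"
proof (induction n arbitrary: s)
  case 0 then show ?case using assms by simp
next
  case (Suc n)
  show ?case unfolding funpow_deriv_Suc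
    by (rule deriv_periodic) (use Suc assms in \<open>auto simp: rsm_def\<close>)
qed

lemma curve_vd:
  assumes "smooth_curve \<gamma>"
  shows "(vderiv n \<gamma> has_vector_derivative vderiv (Suc n) \<gamma> t) (at t)"
proof -
  have "vderiv n \<gamma> differentiable (at t)" using assms unfolding smooth_curve_def by blast
  then have "(vderiv n \<gamma> has_vector_derivative vector_derivative (vderiv n \<gamma>) (at t)) (at t)"
    by (simp add: vector_derivative_works)
  then show ?thesis by simp
qed

lemma ReIm_funpow:
  assumes W: "\<And>n t. (W n has_vector_derivative W (Suc n) t) (at t)"
  shows "(deriv ^^ n) (\<lambda>t. Re (W 0 t)) = (\<lambda>t. Re (W n t)) \<and>
         (deriv ^^ n) (\<lambda>t. Im (W 0 t)) = (\<lambda>t. Im (W n t))"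
proof (induction n)
  case 0 then show ?case by simp
next
  case (Suc n)
  have "deriv (\<lambda>t. Re (W n t)) = (\<lambda>t. Re (W (Suc n) t))"
    by (rule ext, rule DERIV_imp_deriv, rule has_field_derivative_Re, rule W)
  moreover have "deriv (\<lambda>t. Im (W n t)) = (\<lambda>t. Im (W (Suc n) t))"
    by (rule ext, rule DERIV_imp_deriv, rule has_field_derivative_Im, rule W)
  ultimately show ?case using Suc by simp
qed

lemma ReIm_rsm:
  assumes W: "\<And>n t. (W n has_vector_derivative W (Suc n) t) (at t)"
  shows "rsm (\<lambda>t. Re (W 0 t))" "rsm (\<lambda>t. Im (W 0 t))"
proof -
  show "rsm (\<lambda>t. Re (W 0 t))" unfolding rsm_def
  proof (intro allI)
    fix n x
    have "((\<lambda>t. Re (W n t)) has_real_derivative Re (W (Suc n) x)) (at x)"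
      by (rule has_field_derivative_Re, rule W)
    then show "(deriv ^^ n) (\<lambda>t. Re (W 0 t)) differentiable at x"
      using ReIm_funpow[of W n, OF W] by (auto simp: real_differentiable_def)
  qed
  show "rsm (\<lambda>t. Im (W 0 t))" unfolding rsm_def
  proof (intro allI)
    fix n x
    have "((\<lambda>t. Im (W n t)) has_real_derivative Im (W (Suc n) x)) (at x)"
      by (rule has_field_derivative_Im, rule W)
    then show "(deriv ^^ n) (\<lambda>t. Im (W 0 t)) differentiable at x"
      using ReIm_funpow[of W n, OF W] by (auto simp: real_differentiable_def)
  qed
qed

lemma vderiv_periodic:
  assumes sm: "smooth_curve \<gamma>" and per: "\<And>s. \<gamma> (s + 1) = \<gamma> s"
  shows "vderiv n \<gamma> (s + 1) = vderiv n \<gamma> s"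
proof (induction n arbitrary: s)
  case 0 then show ?case using per by simp
next
  case (Suc n)
  have d1: "(vderiv n \<gamma> has_vector_derivative vderiv (Suc n) \<gamma> (s + 1)) (at (s + 1))"
    by (rule curve_vd[OF sm])
  have "((\<lambda>t. vderiv n \<gamma> (t + 1)) has_vector_derivative vderiv (Suc n) \<gamma> (s + 1)) (at s)"
    using d1 unfolding has_vector_derivative_complex_iff
    by (simp add: DERIV_shift)
  moreover have "(\<lambda>t. vderiv n \<gamma> (t + 1)) = vderiv n \<gamma>" using Suc by auto
  ultimately have "(vderiv n \<gamma> has_vector_derivative vderiv (Suc n) \<gamma> (s + 1)) (at s)" by simp
  moreover have "(vderiv n \<gamma> has_vector_derivative vderiv (Suc n) \<gamma> s) (at s)"
    by (rule curve_vd[OF sm])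
  ultimately show ?case by (rule vector_derivative_unique_at)
qed

lemma curv_formula:
  assumes "norm (vderiv 1 \<gamma> s) = 1"
  shows "signed_curvature \<gamma> s =
     Re (vderiv 1 \<gamma> s) * Im (vderiv 2 \<gamma> s) - Im (vderiv 1 \<gamma> s) * Re (vderiv 2 \<gamma> s)"
  using assms unfolding signed_curvature_def by simp

context
  fixes \<gamma> :: "real \<Rightarrow> complex"
  assumes uc: "unit_length_closed_curve \<gamma>"
begin

lemma uc_sm: "smooth_curve \<gamma>" and uc_per: "\<And>s. \<gamma> (s + 1) = \<gamma> s"
  and uc_norm: "\<And>s. norm (vderiv 1 \<gamma> s) = 1"
  using uc unfolding unit_length_closed_curve_def by auto

definition "WW n = vderiv (Suc n) \<gamma>"

lemma WW_vd: "(WW n has_vector_derivative WW (Suc n) t) (at t)"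
  unfolding WW_def by (rule curve_vd[OF uc_sm])

lemma curv_eq: "signed_curvature \<gamma> = (\<lambda>s. Re (WW 0 s) * Im (WW 1 s) - Im (WW 0 s) * Re (WW 1 s))"
  by (rule ext, subst curv_formula[OF uc_norm]) (simp add: WW_def numeral_2_eq_2)

lemma rsm_ReW: "rsm (\<lambda>t. Re (WW n t))" "rsm (\<lambda>t. Im (WW n t))"
proof -
  have W: "\<And>k t. ((\<lambda>k. WW (n + k)) k has_vector_derivative (\<lambda>k. WW (n + k)) (Suc k) t) (at t)"
    using WW_vd by simp
  show "rsm (\<lambda>t. Re (WW n t))" "rsm (\<lambda>t. Im (WW n t))"
    using ReIm_rsm[of "\<lambda>k. WW (n + k)", OF W] by simp_all
qed

lemma rsm_curv: "rsm (\<lambda>s. signed_curvature \<gamma> s - c)"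
  unfolding curv_eq
  by (intro rsm_diff rsm_mult rsm_ReW rsm_const)

lemma curv_periodic: "signed_curvature \<gamma> (s + 1) = signed_curvature \<gamma> s"
proof -
  have "vderiv (Suc 0) \<gamma> (s+1) = vderiv (Suc 0) \<gamma> s" "vderiv (Suc 1) \<gamma> (s+1) = vderiv (Suc 1) \<gamma> s"
    by (rule vderiv_periodic[OF uc_sm uc_per])+
  then show ?thesis unfolding curv_eq WW_def by (simp only:)
qed

end

definition E :: "int \<Rightarrow> real \<Rightarrow> complex" where
  "E n s = exp (\<i> * of_real (2 * pi * of_int n * s))"

definition cf :: "(real \<Rightarrow> real) \<Rightarrow> int \<Rightarrow> complex" where
  "cf g n = integral {0..1} (\<lambda>s. of_real (g s) * E (- n) s)"

lemma E_deriv: "(E n has_vector_derivative (\<i> * of_real (2 * pi * of_int n)) * E n s) (at s within S)"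
proof -
  have eq: "E n = (\<lambda>x. (\<lambda>z. exp (\<i> * of_real (2 * pi * of_int n) * z)) (of_real x))"
    by (rule ext) (simp add: E_def mult.assoc)
  have "((\<lambda>z. exp (\<i> * of_real (2 * pi * of_int n) * z)) has_field_derivative
         exp (\<i> * of_real (2 * pi * of_int n) * of_real s) * (\<i> * of_real (2 * pi * of_int n))) (at (of_real s))"
    by (auto intro!: derivative_eq_intros)
  from has_vector_derivative_real_field[OF this, of S]
  show ?thesis unfolding eq by (simp add: E_def mult.assoc mult.commute mult.left_commute)
qed

lemma E_cont [continuous_intros]: "continuous_on S (E n)"
  unfolding E_def by (intro continuous_intros)

lemma E_mult: "E n s * E m s = E (n + m) s"
  unfolding E_def by (simp add: exp_add[symmetric] algebra_simps)

lemma E_cnj: "cnj (E n s) = E (- n) s"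
  unfolding E_def by (simp add: exp_cnj)

lemma E_norm [simp]: "norm (E n s) = 1"
  unfolding E_def by simp

lemma E_at0 [simp]: "E n 0 = 1"
  unfolding E_def by simp

lemma E_at1 [simp]: "E n 1 = 1"
proof -
  have "E n 1 = exp ((2 * of_int n * pi) * \<i>)"
    unfolding E_def by (simp add: mult_ac)
  also have "\<dots> = 1" by (rule exp_integer_2pi) simp
  finally show ?thesis .
qed

lemma E_zero [simp]: "E 0 s = 1"
  unfolding E_def by simp

lemma int_E: "integral {0..1} (E k) = (if k = 0 then 1 else 0)"
proof (cases "k = 0")
  case True
  have "E 0 = (\<lambda>s. 1)" by (rule ext) simp
  then show ?thesis using True by simp
next
  case False
  define c where "c = \<i> * of_real (2 * pi * of_int k)"
  have c0: "c \<noteq> 0" using False by (simp add: c_def)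
  have "((\<lambda>s. E k s / c) has_vector_derivative E k s) (at s within {0..1})" for s
    using has_vector_derivative_divide[OF E_deriv[of k s "{0..1}"], of c] c0
    by (simp add: c_def)
  then have "(E k has_integral (E k 1 / c - E k 0 / c)) {0..1}"
    by (intro fundamental_theorem_of_calculus) auto
  then show ?thesis using False by (simp add: integral_unique)
qed

lemma of_real_vd:
  "(h has_real_derivative h') (at x) \<Longrightarrow> ((\<lambda>x. complex_of_real (h x)) has_vector_derivative of_real h') (at x)"
  unfolding has_vector_derivative_complex_iff by simp

lemma integral_of_real_cont:
  fixes g :: "real \<Rightarrow> real"
  assumes "continuous_on {a..b} g"
  shows "integral {a..b} (\<lambda>s. complex_of_real (g s)) = of_real (integral {a..b} g)"
  using has_integral_of_real[OF integrable_integral[OF integrable_continuous_interval[OF assms]]]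
  by (rule integral_unique)

lemma ibp:
  fixes h h' :: "real \<Rightarrow> real"
  assumes ch: "continuous_on {0..1} h" and ch': "continuous_on {0..1} h'"
    and d: "\<And>x. x \<in> {0<..<1} \<Longrightarrow> (h has_real_derivative h' x) (at x)"
    and h01: "h 0 = h 1"
  shows "integral {0..1} (\<lambda>s. of_real (h' s) * E (- n) s)
       = \<i> * of_real (2 * pi * of_int n) * integral {0..1} (\<lambda>s. of_real (h s) * E (- n) s)"
proof -
  define c where "c = \<i> * of_real (2 * pi * of_int (- n))"
  define I where "I = integral {0..1} (\<lambda>s. of_real (h s) * E (- n) s)"
  have int1: "((\<lambda>s. of_real (h s) * E (- n) s) has_integral I) {0..1}"
    unfolding I_def
    by (intro integrable_integral integrable_continuous_interval continuous_intros ch)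
  have "((\<lambda>s. c * (of_real (h s) * E (- n) s)) has_integral c * I) {0..1}"
    by (rule has_integral_mult_right[OF int1])
  then have int2: "((\<lambda>s. of_real (h s) * (c * E (- n) s)) has_integral
          (of_real (h 1) * E (- n) 1 - of_real (h 0) * E (- n) 0 - (- (c * I)))) {0..1}"
    using h01 by (simp add: mult_ac)
  have "((\<lambda>s. of_real (h' s) * E (- n) s) has_integral - (c * I)) {0..1}"
  proof (rule integration_by_parts_interior[OF bounded_bilinear_mult, of 0 1 "\<lambda>s. of_real (h s)" "E (- n)"])
    show "continuous_on {0..1} (\<lambda>s. complex_of_real (h s))" by (intro continuous_intros ch)
    show "continuous_on {0..1} (E (- n))" by (rule E_cont)
    show "\<And>x. x \<in> {0<..<1} \<Longrightarrow> ((\<lambda>s. complex_of_real (h s)) has_vector_derivative of_real (h' x)) (at x)"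
      using d by (rule of_real_vd)
    show "\<And>x. x \<in> {0<..<1} \<Longrightarrow> (E (- n) has_vector_derivative c * E (- n) x) (at x)"
      unfolding c_def by (rule E_deriv)
  qed (use int2 in auto)
  then show ?thesis unfolding I_def c_def by (simp add: integral_unique)
qed

lemma cf_deriv:
  assumes "rsm h" "\<And>s. h (s + 1) = h s"
  shows "cf (deriv h) n = \<i> * of_real (2 * pi * of_int n) * cf h n"
  unfolding cf_def
proof (rule ibp)
  show "continuous_on {0..1} h" using rsm_cont[OF assms(1), of _ 0] by simp
  show "continuous_on {0..1} (deriv h)" using rsm_cont[OF assms(1), of _ 1] by simp
  show "\<And>x. (h has_real_derivative deriv h x) (at x)" using rsm_DERIV[OF assms(1), of 0] by simp
  show "h 0 = h 1" using assms(2)[of 0] by simp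
qed

lemma cf_funpow:
  assumes "rsm h" "\<And>s. h (s + 1) = h s"
  shows "cf ((deriv ^^ r) h) n = (\<i> * of_real (2 * pi * of_int n)) ^ r * cf h n"
proof (induction r)
  case 0 then show ?case by simp
next
  case (Suc r)
  have "cf ((deriv ^^ Suc r) h) n = cf (deriv ((deriv ^^ r) h)) n" by simp
  also have "\<dots> = \<i> * of_real (2 * pi * of_int n) * cf ((deriv ^^ r) h) n"
    by (rule cf_deriv) (use assms in \<open>auto intro: rsm_funpow rsm_periodic_funpow\<close>)
  finally show ?case using Suc by simp
qed

lemma has_int_cont: "continuous_on {a..b} (F :: real \<Rightarrow> 'a::banach) \<Longrightarrow> (F has_integral integral {a..b} F) {a..b}"
  by (intro integrable_integral integrable_continuous_interval)

lemma expand: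
  fixes g :: "real \<Rightarrow> real" and b :: "int \<Rightarrow> complex"
  assumes cg: "continuous_on {0..1} g" and fS: "finite S"
  shows "integral {0..1} (\<lambda>s. (cmod (of_real (g s) - (\<Sum>n\<in>S. b n * E n s)))\<^sup>2)
        = integral {0..1} (\<lambda>s. (g s)\<^sup>2) - (\<Sum>n\<in>S. (cmod (cf g n))\<^sup>2) + (\<Sum>n\<in>S. (cmod (b n - cf g n))\<^sup>2)"
proof -
  define G where "G s = complex_of_real (g s)" for s
  define P where "P s = (\<Sum>n\<in>S. b n * E n s)" for s
  have cG: "continuous_on {0..1} G" unfolding G_def by (intro continuous_intros cg)
  have cP: "continuous_on {0..1} P" unfolding P_def by (intro continuous_intros)
  have cnjG: "cnj (G s) = G s" for s unfolding G_def by simp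
  have cnjP: "cnj (P s) = (\<Sum>m\<in>S. cnj (b m) * E (- m) s)" for s
    unfolding P_def by (simp add: E_cnj)
  have key: "of_real ((cmod (G s - P s))\<^sup>2) = of_real ((g s)\<^sup>2)
      - (\<Sum>n\<in>S. cnj (b n) * (G s * E (- n) s)) - (\<Sum>n\<in>S. b n * (G s * E n s))
      + (\<Sum>n\<in>S. \<Sum>m\<in>S. b n * cnj (b m) * E (n - m) s)" for s
  proof -
    have "of_real ((cmod (G s - P s))\<^sup>2) = (G s - P s) * (G s - cnj (P s))"
      using complex_norm_square[of "G s - P s"] by (simp add: cnjG)
    also have "\<dots> = G s * G s - G s * cnj (P s) - P s * G s + P s * cnj (P s)"
      by (simp add: algebra_simps)
    also have "G s * G s = of_real ((g s)\<^sup>2)" unfolding G_def by (simp add: power2_eq_square)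
    also have "G s * cnj (P s) = (\<Sum>n\<in>S. cnj (b n) * (G s * E (- n) s))"
      unfolding cnjP by (simp add: sum_distrib_left mult_ac)
    also have "P s * G s = (\<Sum>n\<in>S. b n * (G s * E n s))"
      unfolding P_def by (simp add: sum_distrib_left sum_distrib_right mult_ac)
    also have "P s * cnj (P s) = (\<Sum>n\<in>S. \<Sum>m\<in>S. b n * cnj (b m) * E (n - m) s)"
    proof -
      have emm: "E n s * E (- m) s = E (n - m) s" for n m using E_mult[of n s "- m"] by simp
      have "P s * cnj (P s) = (\<Sum>n\<in>S. b n * E n s) * (\<Sum>m\<in>S. cnj (b m) * E (- m) s)"
        by (subst cnjP) (simp only: P_def)
      also have "\<dots> = (\<Sum>n\<in>S. \<Sum>m\<in>S. (b n * E n s) * (cnj (b m) * E (- m) s))"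
        by (rule sum_product)
      also have "\<dots> = (\<Sum>n\<in>S. \<Sum>m\<in>S. b n * cnj (b m) * E (n - m) s)"
        by (intro sum.cong refl) (simp add: emm[symmetric] mult_ac)
      finally show ?thesis .
    qed
    finally show ?thesis .
  qed
  have h1: "((\<lambda>s. complex_of_real ((g s)\<^sup>2)) has_integral of_real (integral {0..1} (\<lambda>s. (g s)\<^sup>2))) {0..1}"
    by (intro has_integral_of_real has_int_cont continuous_intros cg)
  have GE: "((\<lambda>s. G s * E (- n) s) has_integral cf g n) {0..1}" for n
    unfolding cf_def G_def by (intro has_int_cont continuous_intros cg)
  have GE': "((\<lambda>s. G s * E n s) has_integral cnj (cf g n)) {0..1}" for n
  proof -
    have "cnj (cf g n) = integral {0..1} (\<lambda>s. G s * E n s)"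
      unfolding cf_def integral_cnj by (simp add: G_def E_cnj)
    then show ?thesis unfolding G_def by (simp, intro has_int_cont continuous_intros cg)
  qed
  have h2: "((\<lambda>s. \<Sum>n\<in>S. cnj (b n) * (G s * E (- n) s)) has_integral (\<Sum>n\<in>S. cnj (b n) * cf g n)) {0..1}"
    by (intro has_integral_sum fS has_integral_mult_right GE)
  have h3: "((\<lambda>s. \<Sum>n\<in>S. b n * (G s * E n s)) has_integral (\<Sum>n\<in>S. b n * cnj (cf g n))) {0..1}"
    by (intro has_integral_sum fS has_integral_mult_right GE')
  have hE: "(E k has_integral (if k = 0 then 1 else 0)) {0..1}" for k
    using has_int_cont[OF E_cont[of "{0..1}" k]] by (simp add: int_E)
  have h4: "((\<lambda>s. \<Sum>n\<in>S. \<Sum>m\<in>S. b n * cnj (b m) * E (n - m) s) has_integral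
           (\<Sum>n\<in>S. \<Sum>m\<in>S. b n * cnj (b m) * (if n - m = 0 then 1 else 0))) {0..1}"
    by (intro has_integral_sum fS has_integral_mult_right hE)
  have inner: "(\<Sum>m\<in>S. b n * cnj (b m) * (if n - m = 0 then 1 else 0)) = b n * cnj (b n)" if "n \<in> S" for n
  proof -
    have "(\<Sum>m\<in>S. b n * cnj (b m) * (if n - m = 0 then 1 else 0)) = (\<Sum>m\<in>S. if n = m then b n * cnj (b m) else 0)"
      by (intro sum.cong refl) auto
    also have "\<dots> = b n * cnj (b n)" using that fS by (simp add: sum.delta)
    finally show ?thesis .
  qed
  define V where "V = of_real (integral {0..1} (\<lambda>s. (g s)\<^sup>2)) - (\<Sum>n\<in>S. cnj (b n) * cf g n)
      - (\<Sum>n\<in>S. b n * cnj (cf g n)) + (\<Sum>n\<in>S. b n * cnj (b n))"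
  have hall: "((\<lambda>s. complex_of_real ((cmod (G s - P s))\<^sup>2)) has_integral V) {0..1}"
  proof -
    have "((\<lambda>s. of_real ((g s)\<^sup>2)
      - (\<Sum>n\<in>S. cnj (b n) * (G s * E (- n) s)) - (\<Sum>n\<in>S. b n * (G s * E n s))
      + (\<Sum>n\<in>S. \<Sum>m\<in>S. b n * cnj (b m) * E (n - m) s)) has_integral V) {0..1}"
      unfolding V_def using h4 inner
      by (intro has_integral_add has_integral_diff h1 h2 h3) (simp cong: sum.cong)
    then show ?thesis using key by simp
  qed
  have cR: "continuous_on {0..1} (\<lambda>s. (cmod (G s - P s))\<^sup>2)"
    by (intro continuous_intros cG cP)
  have "((\<lambda>s. complex_of_real ((cmod (G s - P s))\<^sup>2)) has_integral
          of_real (integral {0..1} (\<lambda>s. (cmod (G s - P s))\<^sup>2))) {0..1}"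
    by (intro has_integral_of_real has_int_cont cR)
  from this hall have LV: "of_real (integral {0..1} (\<lambda>s. (cmod (G s - P s))\<^sup>2)) = V"
    by (rule has_integral_unique)
  have ns: "(complex_of_real (cmod z))\<^sup>2 = z * cnj z" for z
    using complex_norm_square[of z] by simp
  have RV: "complex_of_real (integral {0..1} (\<lambda>s. (g s)\<^sup>2) - (\<Sum>n\<in>S. (cmod (cf g n))\<^sup>2)
      + (\<Sum>n\<in>S. (cmod (b n - cf g n))\<^sup>2)) = V"
  proof -
    have "complex_of_real (integral {0..1} (\<lambda>s. (g s)\<^sup>2) - (\<Sum>n\<in>S. (cmod (cf g n))\<^sup>2)
      + (\<Sum>n\<in>S. (cmod (b n - cf g n))\<^sup>2)) = of_real (integral {0..1} (\<lambda>s. (g s)\<^sup>2))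
      - (\<Sum>n\<in>S. cf g n * cnj (cf g n)) + (\<Sum>n\<in>S. (b n - cf g n) * cnj (b n - cf g n))"
      using complex_norm_square by (simp add: ns)
    also have "(\<Sum>n\<in>S. (b n - cf g n) * cnj (b n - cf g n)) =
       (\<Sum>n\<in>S. b n * cnj (b n)) - (\<Sum>n\<in>S. cnj (b n) * cf g n) - (\<Sum>n\<in>S. b n * cnj (cf g n))
       + (\<Sum>n\<in>S. cf g n * cnj (cf g n))"
    proof -
      have pt: "(b n - cf g n) * cnj (b n - cf g n) = b n * cnj (b n) - cnj (b n) * cf g n
          - b n * cnj (cf g n) + cf g n * cnj (cf g n)" for n
        by (simp add: algebra_simps)
      show ?thesis by (simp only: pt sum.distrib sum_subtractf)
    qed
    finally show ?thesis unfolding V_def by simp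
  qed
  from LV RV have "complex_of_real (integral {0..1} (\<lambda>s. (cmod (G s - P s))\<^sup>2)) =
     complex_of_real (integral {0..1} (\<lambda>s. (g s)\<^sup>2) - (\<Sum>n\<in>S. (cmod (cf g n))\<^sup>2)
      + (\<Sum>n\<in>S. (cmod (b n - cf g n))\<^sup>2))" by (simp only:)
  then have "integral {0..1} (\<lambda>s. (cmod (G s - P s))\<^sup>2) = integral {0..1} (\<lambda>s. (g s)\<^sup>2) - (\<Sum>n\<in>S. (cmod (cf g n))\<^sup>2)
      + (\<Sum>n\<in>S. (cmod (b n - cf g n))\<^sup>2)" by (rule of_real_eq_iff[THEN iffD1])
  then show ?thesis unfolding G_def P_def .
qed

lemma bessel:
  assumes "continuous_on {0..1} g" "finite S"
  shows "(\<Sum>n\<in>S. (cmod (cf g n))\<^sup>2) \<le> integral {0..1} (\<lambda>s. (g s)\<^sup>2)"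
proof -
  have "0 \<le> integral {0..1} (\<lambda>s. (cmod (of_real (g s) - (\<Sum>n\<in>S. cf g n * E n s)))\<^sup>2)"
    by (intro integral_nonneg integrable_continuous_interval continuous_intros assms) auto
  then show ?thesis using expand[OF assms, of "cf g"] by simp
qed

lemma approx_bound:
  assumes "continuous_on {0..1} g" "finite S"
    and "\<And>s. s \<in> {0..1} \<Longrightarrow> cmod (of_real (g s) - (\<Sum>n\<in>S. b n * E n s)) \<le> d"
  shows "integral {0..1} (\<lambda>s. (g s)\<^sup>2) \<le> (\<Sum>n\<in>S. (cmod (cf g n))\<^sup>2) + d\<^sup>2"
proof -
  have i1: "(\<lambda>s. (cmod (of_real (g s) - (\<Sum>n\<in>S. b n * E n s)))\<^sup>2) integrable_on {0..1}"
    by (intro integrable_continuous_interval continuous_intros assms(1,2))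
  have i2: "(\<lambda>s::real. d\<^sup>2) integrable_on {0..1}"
    by (rule integrable_continuous_interval) (rule continuous_on_const)
  have le: "(cmod (of_real (g s) - (\<Sum>n\<in>S. b n * E n s)))\<^sup>2 \<le> d\<^sup>2" if "s \<in> {0..1}" for s
    using assms(3)[OF that] by (intro power_mono) auto
  have "integral {0..1} (\<lambda>s. (cmod (of_real (g s) - (\<Sum>n\<in>S. b n * E n s)))\<^sup>2) \<le> integral {0..1} (\<lambda>s::real. d\<^sup>2)"
    by (rule integral_le[OF i1 i2 le])
  moreover have "0 \<le> (\<Sum>n\<in>S. (cmod (b n - cf g n))\<^sup>2)" by (intro sum_nonneg) auto
  ultimately show ?thesis using expand[OF assms(1,2), of b] by simp
qed

definition tpoly :: "(real \<Rightarrow> complex) \<Rightarrow> bool" where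
  "tpoly p \<longleftrightarrow> (\<exists>S b. finite S \<and> (\<forall>s. p s = (\<Sum>n\<in>S. b n * E n s)))"

lemma tpoly_const: "tpoly (\<lambda>s. c)"
  unfolding tpoly_def by (rule exI[of _ "{0}"], rule exI[of _ "\<lambda>_. c"]) simp

lemma tpoly_E: "tpoly (E k)"
  unfolding tpoly_def by (rule exI[of _ "{k}"], rule exI[of _ "\<lambda>_. 1"]) simp

lemma tpoly_add:
  assumes "tpoly p" "tpoly q" shows "tpoly (\<lambda>s. p s + q s)"
proof -
  obtain S b where S: "finite S" "\<And>s. p s = (\<Sum>n\<in>S. b n * E n s)" using assms(1) unfolding tpoly_def by blast
  obtain T c where T: "finite T" "\<And>s. q s = (\<Sum>n\<in>T. c n * E n s)" using assms(2) unfolding tpoly_def by blast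
  define d where "d n = (if n \<in> S then b n else 0) + (if n \<in> T then c n else 0)" for n
  have "p s + q s = (\<Sum>n\<in>S \<union> T. d n * E n s)" for s
  proof -
    have "(\<Sum>n\<in>S \<union> T. d n * E n s) = (\<Sum>n\<in>S \<union> T. (if n \<in> S then b n * E n s else 0)
        + (if n \<in> T then c n * E n s else 0))"
      by (intro sum.cong refl) (simp add: d_def distrib_right)
    also have "\<dots> = (\<Sum>n\<in>S \<union> T. (if n \<in> S then b n * E n s else 0))
        + (\<Sum>n\<in>S \<union> T. (if n \<in> T then c n * E n s else 0))"
      by (rule sum.distrib)
    also have "(\<Sum>n\<in>S \<union> T. (if n \<in> S then b n * E n s else 0)) = (\<Sum>n\<in>(S \<union> T) \<inter> S. b n * E n s)"
      by (rule sum.inter_restrict[symmetric]) (use S T in simp)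
    also have "(S \<union> T) \<inter> S = S" by blast
    also have "(\<Sum>n\<in>S \<union> T. (if n \<in> T then c n * E n s else 0)) = (\<Sum>n\<in>(S \<union> T) \<inter> T. c n * E n s)"
      by (rule sum.inter_restrict[symmetric]) (use S T in simp)
    also have "(S \<union> T) \<inter> T = T" by blast
    finally show ?thesis using S T by simp
  qed
  then show ?thesis unfolding tpoly_def using S T by blast
qed

lemma tpoly_mult:
  assumes "tpoly p" "tpoly q" shows "tpoly (\<lambda>s. p s * q s)"
proof -
  obtain S b where S: "finite S" "\<And>s. p s = (\<Sum>n\<in>S. b n * E n s)" using assms(1) unfolding tpoly_def by blast
  obtain T c where T: "finite T" "\<And>s. q s = (\<Sum>n\<in>T. c n * E n s)" using assms(2) unfolding tpoly_def by blast
  define U where "U = (\<lambda>(n, m). n + m) ` (S \<times> T)"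
  define d where "d k = (\<Sum>x\<in>{x \<in> S \<times> T. (\<lambda>(n, m). n + m) x = k}. b (fst x) * c (snd x))" for k
  have fU: "finite U" unfolding U_def using S T by simp
  have "p s * q s = (\<Sum>k\<in>U. d k * E k s)" for s
  proof -
    have "p s * q s = (\<Sum>x\<in>S \<times> T. b (fst x) * c (snd x) * E ((\<lambda>(n, m). n + m) x) s)"
      unfolding S(2) T(2) sum_product sum.cartesian_product
      by (intro sum.cong refl) (auto simp: E_mult[symmetric] mult_ac)
    also have "\<dots> = (\<Sum>k\<in>U. \<Sum>x\<in>{x \<in> S \<times> T. (\<lambda>(n, m). n + m) x = k}. b (fst x) * c (snd x) * E ((\<lambda>(n, m). n + m) x) s)"
      by (rule sum.group[symmetric]) (use S T fU in \<open>auto simp: U_def\<close>)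
    also have "\<dots> = (\<Sum>k\<in>U. d k * E k s)"
      unfolding d_def sum_distrib_right by (intro sum.cong refl) auto
    finally show ?thesis .
  qed
  then show ?thesis unfolding tpoly_def using fU by blast
qed

lemma cos_tp: "complex_of_real (cos (2 * pi * s)) = (E 1 s + E (- 1) s) / 2"
proof -
  have "complex_of_real (cos (2 * pi * s)) = cos (complex_of_real (2 * pi * s))" by (rule cos_of_real[symmetric])
  also have "\<dots> = (exp (\<i> * of_real (2 * pi * s)) + exp (- (\<i> * of_real (2 * pi * s)))) / 2" by (rule cos_exp_eq)
  also have "\<dots> = (E 1 s + E (- 1) s) / 2" unfolding E_def by simp
  finally show ?thesis .
qed

lemma sin_tp: "complex_of_real (sin (2 * pi * s)) = (E 1 s - E (- 1) s) / (2 * \<i>)"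
proof -
  have "complex_of_real (sin (2 * pi * s)) = sin (complex_of_real (2 * pi * s))" by (rule sin_of_real[symmetric])
  also have "\<dots> = (exp (\<i> * of_real (2 * pi * s)) - exp (- (\<i> * of_real (2 * pi * s)))) / (2 * \<i>)" by (rule sin_exp_eq)
  also have "\<dots> = (E 1 s - E (- 1) s) / (2 * \<i>)" unfolding E_def by simp
  finally show ?thesis .
qed

lemma tpoly_cos: "tpoly (\<lambda>s. complex_of_real (cos (2 * pi * s)))"
proof -
  have "tpoly (\<lambda>s. (E 1 s + E (- 1) s) * (1 / 2))"
    by (intro tpoly_mult tpoly_add tpoly_E tpoly_const)
  then show ?thesis unfolding cos_tp by simp
qed

lemma tpoly_sin: "tpoly (\<lambda>s. complex_of_real (sin (2 * pi * s)))"
proof -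
  have "tpoly (\<lambda>s. (E 1 s + (- 1) * E (- 1) s) * (1 / (2 * \<i>)))"
    by (intro tpoly_mult tpoly_add tpoly_E tpoly_const)
  moreover have "(\<lambda>s. complex_of_real (sin (2 * pi * s))) = (\<lambda>s. (E 1 s + (- 1) * E (- 1) s) * (1 / (2 * \<i>)))"
    by (rule ext) (simp only: sin_tp diff_conv_add_uminus mult_minus1 divide_inverse mult.left_neutral)
  ultimately show ?thesis by simp
qed

lemma tpoly_rpf:
  fixes q :: "complex \<Rightarrow> real"
  assumes "real_polynomial_function q"
  shows "tpoly (\<lambda>s. complex_of_real (q (cis (2 * pi * s))))"
  using assms
proof (induction q rule: real_polynomial_function.induct)
  case (linear f)
  have lin: "f z = Re z * f 1 + Im z * f \<i>" for z
  proof -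
    have "z = Re z *\<^sub>R 1 + Im z *\<^sub>R \<i>" by (simp add: complex_eq_iff)
    then have "f z = f (Re z *\<^sub>R 1 + Im z *\<^sub>R \<i>)" by simp
    also have "\<dots> = Re z * f 1 + Im z * f \<i>"
      using linear.hyps by (simp add: bounded_linear.linear linear_add linear_scale)
    finally show ?thesis .
  qed
  have "tpoly (\<lambda>s. complex_of_real (cos (2 * pi * s)) * of_real (f 1) + complex_of_real (sin (2 * pi * s)) * of_real (f \<i>))"
    by (intro tpoly_add tpoly_mult tpoly_cos tpoly_sin tpoly_const)
  moreover have "(\<lambda>s. complex_of_real (f (cis (2 * pi * s)))) = (\<lambda>s. complex_of_real (cos (2 * pi * s)) * of_real (f 1) + complex_of_real (sin (2 * pi * s)) * of_real (f \<i>))"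
  proof
    fix s
    show "complex_of_real (f (cis (2 * pi * s))) = complex_of_real (cos (2 * pi * s)) * of_real (f 1) + complex_of_real (sin (2 * pi * s)) * of_real (f \<i>)"
      by (subst lin) simp
  qed
  ultimately show ?case by simp
next
  case (const c)
  then show ?case using tpoly_const by simp
next
  case (add f g)
  then show ?case using tpoly_add[OF add.IH] by simp
next
  case (mult f g)
  then show ?case using tpoly_mult[OF mult.IH] by simp
qed

lemma Arg_cis_per:
  fixes g :: "real \<Rightarrow> real"
  assumes per: "\<And>x. g (x + 1) = g x" and s: "s \<in> {0..1}"
  shows "g (Arg (cis (2 * pi * s)) / (2 * pi)) = g s"
proof (cases "s \<le> 1/2")
  case True
  have a1: "0 \<le> 2 * pi * s" using s by simp
  have "pi * (2 * s) \<le> pi * 1" using True by (intro mult_left_mono) auto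
  then have a2: "2 * pi * s \<le> pi" by (simp add: mult_ac)
  have a0: "- pi < 2 * pi * s" using a1 pi_gt_zero by linarith
  have "Arg (cis (2 * pi * s)) = 2 * pi * s"
    by (rule Arg_unique[of 1]) (use a0 a2 in \<open>auto simp: cis_conv_exp\<close>)
  then show ?thesis by simp
next
  case False
  have e: "exp (\<i> * complex_of_real (2 * pi * s - 2 * pi)) = exp (\<i> * complex_of_real (2 * pi * s))"
  proof -
    have "exp (\<i> * complex_of_real (2 * pi * s - 2 * pi)) = exp (\<i> * complex_of_real (2 * pi * s) - \<i> * (of_real pi * 2))"
      by (simp add: algebra_simps)
    also have "\<dots> = exp (\<i> * complex_of_real (2 * pi * s)) / exp (\<i> * (of_real pi * 2))"
      by (rule exp_diff)
    also have "\<dots> = exp (\<i> * complex_of_real (2 * pi * s))" by simp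
    finally show ?thesis .
  qed
  have "pi * 1 < pi * (2 * s)" using False by (intro mult_strict_left_mono) auto
  then have a1: "- pi < 2 * pi * s - 2 * pi" by (simp add: mult_ac)
  have "pi * s \<le> pi * 1" using s by (intro mult_left_mono) auto
  then have a2: "2 * pi * s - 2 * pi \<le> pi" using pi_gt_zero by (simp add: mult_ac)
  have "Arg (cis (2 * pi * s)) = 2 * pi * s - 2 * pi"
    by (rule Arg_unique[of 1]) (use a1 a2 e in \<open>auto simp: cis_conv_exp\<close>)
  then have "Arg (cis (2 * pi * s)) / (2 * pi) = s - 1"
    using pi_gt_zero by (simp add: field_simps)
  then show ?thesis using per[of "s - 1"] by simp
qed

lemma trig_approx:
  fixes g :: "real \<Rightarrow> real"
  assumes cg: "continuous_on UNIV g" and per: "\<And>x. g (x + 1) = g x" and d: "d > 0"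
  shows "\<exists>S b. finite S \<and> (\<forall>s\<in>{0..1}. cmod (of_real (g s) - (\<Sum>n\<in>S. b n * E n s)) \<le> d)"
proof -
  define F where "F z = g (Arg z / (2 * pi))" for z
  define A where "A = sphere (0::complex) 1 \<inter> {z. Re z \<ge> 0}"
  define B where "B = sphere (0::complex) 1 \<inter> {z. Re z \<le> 0}"
  have cA: "continuous_on A F"
    unfolding F_def
  proof (intro continuous_on_compose2[OF cg] continuous_intros)
    show "\<And>z. z \<in> A \<Longrightarrow> z \<notin> \<real>\<^sub>\<le>\<^sub>0"
      unfolding A_def by (auto simp: complex_nonpos_Reals_iff norm_complex_def)
  qed auto
  have FB: "F z = g (Arg (- z) / (2 * pi) + 1 / 2)" if "z \<in> B" for z
  proof -
    have z0: "z \<noteq> 0" using that unfolding B_def by auto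
    show ?thesis
    proof (cases "Arg z \<le> 0")
      case True
      then have "Arg (- z) / (2 * pi) + 1 / 2 = Arg z / (2 * pi) + 1"
        using Arg_minus[OF z0] by (simp add: field_simps)
      then show ?thesis unfolding F_def using per by simp
    next
      case False
      then have "Arg (- z) / (2 * pi) + 1 / 2 = Arg z / (2 * pi)"
        using Arg_minus[OF z0] by (simp add: field_simps)
      then show ?thesis unfolding F_def by simp
    qed
  qed
  have cB: "continuous_on B F"
  proof -
    have "continuous_on B (\<lambda>z. g (Arg (- z) / (2 * pi) + 1 / 2))"
    proof (intro continuous_on_compose2[OF cg] continuous_intros)
      show "\<And>z. z \<in> B \<Longrightarrow> - z \<notin> \<real>\<^sub>\<le>\<^sub>0"
        unfolding B_def by (auto simp: complex_nonpos_Reals_iff norm_complex_def)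
    qed auto
    moreover have "continuous_on B F = continuous_on B (\<lambda>z. g (Arg (- z) / (2 * pi) + 1 / 2))"
      by (rule continuous_on_cong[OF refl FB])
    ultimately show ?thesis by blast
  qed
  have "continuous_on (A \<union> B) F"
    by (rule continuous_on_closed_Un[OF _ _ cA cB])
       (auto simp: A_def B_def intro!: closed_Int closed_halfspace_Re_ge closed_halfspace_Re_le)
  moreover have "A \<union> B = sphere 0 1" unfolding A_def B_def by auto
  ultimately have cF: "continuous_on (sphere 0 1) F" by simp
  obtain q where q: "polynomial_function q" "\<forall>z\<in>sphere 0 1. norm (F z - q z) < d"
    using Stone_Weierstrass_polynomial_function[OF compact_sphere cF d] by blast
  have "real_polynomial_function q" using q(1) by (simp add: real_polynomial_function_eq)
  then obtain S b where S: "finite S" "\<And>s. complex_of_real (q (cis (2 * pi * s))) = (\<Sum>n\<in>S. b n * E n s)"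
    using tpoly_rpf unfolding tpoly_def by blast
  have "cmod (of_real (g s) - (\<Sum>n\<in>S. b n * E n s)) \<le> d" if s: "s \<in> {0..1}" for s
  proof -
    have "cis (2 * pi * s) \<in> sphere 0 1" by simp
    then have "\<bar>F (cis (2 * pi * s)) - q (cis (2 * pi * s))\<bar> < d" using q(2) by auto
    moreover have "F (cis (2 * pi * s)) = g s" unfolding F_def by (rule Arg_cis_per[of g, OF per s])
    ultimately have "\<bar>g s - q (cis (2 * pi * s))\<bar> < d" by simp
    moreover have "of_real (g s) - (\<Sum>n\<in>S. b n * E n s) = complex_of_real (g s - q (cis (2 * pi * s)))"
      using S(2)[of s] by simp
    ultimately show ?thesis by (simp only: norm_of_real)
  qed
  then show ?thesis using S(1) by blast
qed

lemma int_key: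
  fixes n w :: int
  assumes "n \<noteq> 0" "n \<noteq> w" "n \<noteq> - w" "w \<noteq> 0"
  shows "n\<^sup>2 \<le> 2 * w\<^sup>2 * \<bar>n\<^sup>2 - w\<^sup>2\<bar>"
proof -
  define N where "N = n\<^sup>2"
  define W where "W = w\<^sup>2"
  have "0 < N" unfolding N_def using assms(1) by simp
  then have N1: "N \<ge> 1" by linarith
  have "0 < W" unfolding W_def using assms(4) by simp
  then have W1: "W \<ge> 1" by linarith
  have NW: "N \<noteq> W"
  proof
    assume "N = W"
    then have "n\<^sup>2 = w\<^sup>2" unfolding N_def W_def .
    then show False using assms(2,3) power2_eq_iff by auto
  qed
  have "N \<le> 2 * W * \<bar>N - W\<bar>"
  proof (cases "N \<ge> 2 * W")
    case True
    have "N \<le> 2 * 1 * (N - W)" using True by simp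
    also have "\<dots> \<le> 2 * W * (N - W)" using W1 True by (intro mult_right_mono) auto
    also have "\<dots> = 2 * W * \<bar>N - W\<bar>" using True W1 by simp
    finally show ?thesis .
  next
    case False
    have "\<bar>N - W\<bar> \<ge> 1" using NW by linarith
    have "N \<le> 2 * W * 1" using False by simp
    also have "\<dots> \<le> 2 * W * \<bar>N - W\<bar>" using W1 \<open>\<bar>N - W\<bar> \<ge> 1\<close> by (intro mult_left_mono) auto
    finally show ?thesis .
  qed
  then show ?thesis unfolding N_def W_def .
qed

lemma real_key:
  fixes n w :: int
  assumes "n \<noteq> 0" "n \<noteq> w" "n \<noteq> - w" "w \<noteq> 0"
  shows "(real_of_int n)^4 \<le> 4 * (real_of_int w)^4 * ((real_of_int n)\<^sup>2 - (real_of_int w)\<^sup>2)\<^sup>2"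
proof -
  have "(n\<^sup>2)\<^sup>2 \<le> (2 * w\<^sup>2 * \<bar>n\<^sup>2 - w\<^sup>2\<bar>)\<^sup>2"
    using int_key[OF assms] by (intro power_mono) auto
  then have "real_of_int ((n\<^sup>2)\<^sup>2) \<le> real_of_int ((2 * w\<^sup>2 * \<bar>n\<^sup>2 - w\<^sup>2\<bar>)\<^sup>2)"
    by (simp only: of_int_le_iff)
  then show ?thesis by (simp add: power_mult_distrib power2_abs flip: power_mult)
qed

definition wn :: "nat \<Rightarrow> int \<Rightarrow> int \<Rightarrow> real" where
  "wn m w n = (2 * pi) ^ (2 * m + 4) *
     (\<bar>real_of_int n\<bar> ^ (2 * m) * ((real_of_int n)\<^sup>2 - (real_of_int w)\<^sup>2)\<^sup>2)"

lemma inf_ge1: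
  assumes "w \<noteq> 0"
  shows "1 \<le> (INF n \<in> {n::int. n \<noteq> 0 \<and> n \<noteq> w \<and> n \<noteq> - w}.
        \<bar>real_of_int n\<bar> ^ (2 * m) * ((real_of_int n)\<^sup>2 - (real_of_int w)\<^sup>2)\<^sup>2)"
proof (rule cINF_greatest)
  show "{n::int. n \<noteq> 0 \<and> n \<noteq> w \<and> n \<noteq> - w} \<noteq> {}"
  proof -
    have "\<bar>w\<bar> + 1 \<in> {n::int. n \<noteq> 0 \<and> n \<noteq> w \<and> n \<noteq> - w}" by auto
    then show ?thesis by blast
  qed
  fix n assume "n \<in> {n::int. n \<noteq> 0 \<and> n \<noteq> w \<and> n \<noteq> - w}"
  then have n: "n \<noteq> 0" "n \<noteq> w" "n \<noteq> - w" by auto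
  have a: "1 \<le> \<bar>real_of_int n\<bar>" using n(1) by linarith
  then have a': "1 \<le> \<bar>real_of_int n\<bar> ^ (2 * m)" by (rule one_le_power)
  have "n\<^sup>2 \<noteq> w\<^sup>2"
  proof
    assume "n\<^sup>2 = w\<^sup>2"
    then show False using n power2_eq_iff by auto
  qed
  then have "1 \<le> \<bar>n\<^sup>2 - w\<^sup>2\<bar>" by linarith
  then have "1 \<le> \<bar>real_of_int (n\<^sup>2 - w\<^sup>2)\<bar>" by linarith
  then have "1 \<le> \<bar>(real_of_int n)\<^sup>2 - (real_of_int w)\<^sup>2\<bar>" by simp
  then have b: "1 \<le> ((real_of_int n)\<^sup>2 - (real_of_int w)\<^sup>2)\<^sup>2"
    by (metis abs_le_square_iff abs_one one_power2)
  show "1 \<le> \<bar>real_of_int n\<bar> ^ (2 * m) * ((real_of_int n)\<^sup>2 - (real_of_int w)\<^sup>2)\<^sup>2"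
    using mult_mono[OF a' b] by simp
qed

lemma mu_pos: "w \<noteq> 0 \<Longrightarrow> mu m w > 0"
  unfolding mu_def using inf_ge1[of w m] by (intro mult_pos_pos) auto

lemma mu_le_wn:
  assumes "n \<noteq> 0" "n \<noteq> w" "n \<noteq> - w"
  shows "mu m w \<le> wn m w n"
  unfolding mu_def wn_def
proof (rule mult_left_mono)
  show "0 \<le> (2 * pi) ^ (2 * m + 4)" by simp
  show "(INF n \<in> {n::int. n \<noteq> 0 \<and> n \<noteq> w \<and> n \<noteq> - w}.
        \<bar>real_of_int n\<bar> ^ (2 * m) * ((real_of_int n)\<^sup>2 - (real_of_int w)\<^sup>2)\<^sup>2)
     \<le> \<bar>real_of_int n\<bar> ^ (2 * m) * ((real_of_int n)\<^sup>2 - (real_of_int w)\<^sup>2)\<^sup>2"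
    by (rule cINF_lower) (auto intro!: bdd_belowI[of _ 0] simp: assms)
qed

lemma pw_le:
  fixes n w :: int
  assumes "n \<noteq> 0" "n \<noteq> w" "n \<noteq> - w" "w \<noteq> 0" "r \<le> m + 2"
  shows "(2 * pi * \<bar>real_of_int n\<bar>) ^ (2 * r) \<le> 4 * (real_of_int w)^4 * wn m w n"
proof -
  have p1: "1 \<le> 2 * pi" using pi_gt3 by linarith
  have n1: "1 \<le> \<bar>real_of_int n\<bar>" using assms(1) by linarith
  have "(2 * pi * \<bar>real_of_int n\<bar>) ^ (2 * r) = (2 * pi) ^ (2 * r) * \<bar>real_of_int n\<bar> ^ (2 * r)"
    by (simp add: power_mult_distrib)
  also have "\<dots> \<le> (2 * pi) ^ (2 * m + 4) * \<bar>real_of_int n\<bar> ^ (2 * m + 4)"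
    using assms(5) p1 n1 by (intro mult_mono power_increasing) auto
  also have "\<bar>real_of_int n\<bar> ^ (2 * m + 4) = \<bar>real_of_int n\<bar> ^ (2 * m) * (real_of_int n)^4"
    by (simp add: power_add power_even_abs_numeral)
  also have "(2 * pi) ^ (2 * m + 4) * (\<bar>real_of_int n\<bar> ^ (2 * m) * (real_of_int n)^4) \<le>
     (2 * pi) ^ (2 * m + 4) * (\<bar>real_of_int n\<bar> ^ (2 * m) *
        (4 * (real_of_int w)^4 * ((real_of_int n)\<^sup>2 - (real_of_int w)\<^sup>2)\<^sup>2))"
    using real_key[OF assms(1-4)] by (intro mult_left_mono) auto
  also have "\<dots> = 4 * (real_of_int w)^4 * wn m w n" unfolding wn_def by (simp add: mult_ac)
  finally show ?thesis .
qed

lemma cf_lin: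
  assumes "continuous_on {0..1} A" "continuous_on {0..1} B"
  shows "cf (\<lambda>t. A t + c * B t) n = cf A n + of_real c * cf B n"
proof -
  have "cf (\<lambda>t. A t + c * B t) n = integral {0..1} (\<lambda>s. of_real (A s) * E (- n) s + of_real c * (of_real (B s) * E (- n) s))"
    unfolding cf_def by (simp add: algebra_simps)
  also have "\<dots> = integral {0..1} (\<lambda>s. of_real (A s) * E (- n) s) + integral {0..1} (\<lambda>s. of_real c * (of_real (B s) * E (- n) s))"
    by (intro integral_add integrable_continuous_interval continuous_intros assms)
  also have "\<dots> = cf A n + of_real c * cf B n" unfolding cf_def by simp
  finally show ?thesis .
qed

lemma norm_sym:
  fixes a k :: real
  shows "cmod ((\<i> * of_real a) ^ (m + 2) + of_real (k\<^sup>2) * (\<i> * of_real a) ^ m) = \<bar>a\<bar> ^ m * \<bar>k\<^sup>2 - a\<^sup>2\<bar>"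
proof -
  have "(\<i> * complex_of_real a) ^ (m + 2) + of_real (k\<^sup>2) * (\<i> * of_real a) ^ m
      = (\<i> * of_real a) ^ m * of_real (k\<^sup>2 - a\<^sup>2)"
    by (simp add: power_add power2_eq_square algebra_simps)
  then have "cmod ((\<i> * of_real a) ^ (m + 2) + of_real (k\<^sup>2) * (\<i> * of_real a) ^ m)
      = cmod ((\<i> * of_real a) ^ m * complex_of_real (k\<^sup>2 - a\<^sup>2))" by (simp only:)
  also have "\<dots> = cmod (\<i> * of_real a) ^ m * \<bar>k\<^sup>2 - a\<^sup>2\<bar>"
    by (simp only: norm_mult norm_power norm_of_real)
  also have "\<dots> = \<bar>a\<bar> ^ m * \<bar>k\<^sup>2 - a\<^sup>2\<bar>" by (simp add: norm_mult)
  finally show ?thesis .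
qed

lemma abs_a: "\<bar>2 * pi * real_of_int n\<bar> = 2 * pi * \<bar>real_of_int n\<bar>"
  by (simp add: abs_mult)

lemma sq_pow: "((x::real) ^ m)\<^sup>2 = x ^ (2 * m)"
  by (simp add: power_mult[symmetric] mult.commute)

lemma cfL_sq:
  fixes w n :: int
  defines "a \<equiv> 2 * pi * real_of_int n" and "k \<equiv> 2 * pi * real_of_int w"
  shows "(\<bar>a\<bar> ^ m * \<bar>k\<^sup>2 - a\<^sup>2\<bar>)\<^sup>2 = wn m w n"
proof -
  have h1: "(\<bar>a\<bar> ^ m)\<^sup>2 = (2 * pi) ^ (2 * m) * \<bar>real_of_int n\<bar> ^ (2 * m)"
    unfolding a_def abs_a sq_pow by (simp add: power_mult_distrib)
  have "k\<^sup>2 - a\<^sup>2 = - ((2 * pi)\<^sup>2 * ((real_of_int n)\<^sup>2 - (real_of_int w)\<^sup>2))"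
    unfolding a_def k_def by (simp add: power_mult_distrib algebra_simps)
  then have h2: "(\<bar>k\<^sup>2 - a\<^sup>2\<bar>)\<^sup>2 = (2 * pi) ^ 4 * ((real_of_int n)\<^sup>2 - (real_of_int w)\<^sup>2)\<^sup>2"
    by (simp add: power_mult_distrib flip: power_mult)
  have "(\<bar>a\<bar> ^ m * \<bar>k\<^sup>2 - a\<^sup>2\<bar>)\<^sup>2 = (\<bar>a\<bar> ^ m)\<^sup>2 * (\<bar>k\<^sup>2 - a\<^sup>2\<bar>)\<^sup>2"
    by (simp add: power_mult_distrib)
  also have "\<dots> = (2 * pi) ^ (2 * m) * (2 * pi) ^ 4 *
      (\<bar>real_of_int n\<bar> ^ (2 * m) * ((real_of_int n)\<^sup>2 - (real_of_int w)\<^sup>2)\<^sup>2)"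
    unfolding h1 h2 by (simp add: mult_ac)
  also have "\<dots> = wn m w n" unfolding wn_def by (simp add: power_add)
  finally show ?thesis .
qed

lemma K_sum:
  fixes w :: int and h :: "int \<Rightarrow> real"
  assumes "w \<noteq> 0" "finite S" "\<And>n. 0 \<le> h n"
  shows "(\<Sum>n\<in>S. h n) \<le> h 0 + h w + h (- w) + (\<Sum>n\<in>S - {0, w, - w}. h n)"
proof -
  have "(\<Sum>n\<in>S. h n) = (\<Sum>n\<in>S \<inter> {0, w, - w}. h n) + (\<Sum>n\<in>S - {0, w, - w}. h n)"
    by (rule sum.Int_Diff) (rule assms(2))
  also have "(\<Sum>n\<in>S \<inter> {0, w, - w}. h n) \<le> (\<Sum>n\<in>{0, w, - w}. h n)"
    by (rule sum_mono2) (auto simp: assms(3))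
  also have "(\<Sum>n\<in>{0, w, - w}. h n) = h 0 + h w + h (- w)"
    using assms(1) by simp
  finally show ?thesis by simp
qed

lemma spectral:
  fixes f :: "real \<Rightarrow> real" and m :: nat and w :: int and B :: real
  assumes rf: "rsm f" and per: "\<And>s. f (s + 1) = f s" and w0: "w \<noteq> 0"
    and c0: "cf f 0 = 0" and cw: "(cmod (cf f w))\<^sup>2 \<le> B" and cw': "(cmod (cf f (- w)))\<^sup>2 \<le> B"
  shows "mu m w * integral {0..1} (\<lambda>s. (f s)\<^sup>2) - 2 * mu m w * B \<le> dissipation m (2 * pi * of_int w) f"
    and "r \<le> m + 2 \<Longrightarrow> integral {0..1} (\<lambda>s. ((deriv ^^ r) f s)\<^sup>2)
          \<le> 4 * (of_int w)^4 * dissipation m (2 * pi * of_int w) f + 2 * (2 * pi * of_int w) ^ (2 * r) * B"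
proof -
  define k where "k = 2 * pi * real_of_int w"
  define e where "e = integral {0..1} (\<lambda>s. (f s)\<^sup>2)"
  define L where "L = (\<lambda>t. (deriv ^^ (m + 2)) f t + k\<^sup>2 * (deriv ^^ m) f t)"
  define D where "D = dissipation m k f"
  have Leq: "(deriv ^^ m) (\<lambda>t. (deriv ^^ 2) f t + k\<^sup>2 * f t) = L"
  proof -
    have r2: "rsm ((deriv ^^ 2) f)" by (rule rsm_funpow[OF rf])
    have rk: "rsm (\<lambda>t. k\<^sup>2 * f t)" by (rule rsm_cmult[OF rf])
    have "(deriv ^^ m) (\<lambda>t. (deriv ^^ 2) f t + k\<^sup>2 * f t) =
        (\<lambda>t. (deriv ^^ m) ((deriv ^^ 2) f) t + (deriv ^^ m) (\<lambda>t. k\<^sup>2 * f t) t)"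
      by (rule rsm_add_eq[OF r2 rk])
    also have "(deriv ^^ m) (\<lambda>t. k\<^sup>2 * f t) = (\<lambda>t. k\<^sup>2 * (deriv ^^ m) f t)"
      by (rule rsm_cmult_eq[OF rf])
    also have "(deriv ^^ m) ((deriv ^^ 2) f) = (deriv ^^ (m + 2)) f"
      by (simp only: funpow_add o_apply)
    finally show ?thesis unfolding L_def .
  qed
  have D_eq: "D = integral {0..1} (\<lambda>s. (L s)\<^sup>2)"
    unfolding D_def dissipation_def Leq ..
  have cL: "continuous_on {0..1} L" unfolding L_def
    by (intro continuous_intros rsm_cont[OF rf])
  have cfr: "continuous_on S ((deriv ^^ r) f)" for S r by (rule rsm_cont[OF rf])
  have perr: "\<And>r s. (deriv ^^ r) f (s + 1) = (deriv ^^ r) f s"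
    by (rule rsm_periodic_funpow[OF rf per])
  have cfL: "cf L n = ((\<i> * of_real (2 * pi * of_int n)) ^ (m + 2) + of_real (k\<^sup>2) * (\<i> * of_real (2 * pi * of_int n)) ^ m) * cf f n" for n
  proof -
    have "cf L n = cf ((deriv ^^ (m + 2)) f) n + of_real (k\<^sup>2) * cf ((deriv ^^ m) f) n"
      unfolding L_def by (rule cf_lin) (rule cfr)+
    then show ?thesis by (simp only: cf_funpow[OF rf per]) (simp only: distrib_right mult.assoc)
  qed
  have cfL2: "(cmod (cf L n))\<^sup>2 = wn m w n * (cmod (cf f n))\<^sup>2" for n
  proof -
    have "(cmod (cf L n))\<^sup>2 = (\<bar>2 * pi * real_of_int n\<bar> ^ m * \<bar>k\<^sup>2 - (2 * pi * real_of_int n)\<^sup>2\<bar>)\<^sup>2 * (cmod (cf f n))\<^sup>2"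
      unfolding cfL norm_mult norm_sym by (simp add: power_mult_distrib)
    also have "(\<bar>2 * pi * real_of_int n\<bar> ^ m * \<bar>k\<^sup>2 - (2 * pi * real_of_int n)\<^sup>2\<bar>)\<^sup>2 = wn m w n"
      unfolding k_def by (rule cfL_sq)
    finally show ?thesis .
  qed
  have Dnn: "0 \<le> D" unfolding D_eq
    by (intro integral_nonneg integrable_continuous_interval continuous_intros cL) auto
  have bessL: "(\<Sum>n\<in>T. (cmod (cf L n))\<^sup>2) \<le> D" if "finite T" for T
    unfolding D_eq by (rule bessel[OF cL that])
  have mpos: "0 < mu m w" by (rule mu_pos[OF w0])
  let ?K = "{0, w, - w}"
  have offK: "mu m w * (\<Sum>n\<in>T - ?K. (cmod (cf f n))\<^sup>2) \<le> (\<Sum>n\<in>T - ?K. (cmod (cf L n))\<^sup>2)" if "finite T" for T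
    unfolding sum_distrib_left
  proof (rule sum_mono)
    fix n assume "n \<in> T - ?K"
    then have "mu m w \<le> wn m w n" by (intro mu_le_wn) auto
    then show "mu m w * (cmod (cf f n))\<^sup>2 \<le> (cmod (cf L n))\<^sup>2"
      unfolding cfL2 by (rule mult_right_mono) simp
  qed
  have bessK: "(\<Sum>n\<in>T - ?K. (cmod (cf L n))\<^sup>2) \<le> D" if "finite T" for T
    using bessL[of "T - ?K"] that by simp
  have approx: "\<exists>T. finite T \<and> integral {0..1} (\<lambda>s. (g s)\<^sup>2) \<le> (\<Sum>n\<in>T. (cmod (cf g n))\<^sup>2) + \<epsilon>"
    if rg0: "rsm g" and pg0: "\<And>s. g (s + 1) = g s" and ep0: "\<epsilon> > 0" for g \<epsilon>
  proof -
    have cg: "continuous_on UNIV g" using rsm_cont[OF rg0, of UNIV 0] by simp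
    obtain T b where T: "finite T" "\<forall>s\<in>{0..1}. cmod (of_real (g s) - (\<Sum>n\<in>T. b n * E n s)) \<le> sqrt \<epsilon>"
      using trig_approx[OF cg pg0, of "sqrt \<epsilon>"] ep0 by auto
    have "integral {0..1} (\<lambda>s. (g s)\<^sup>2) \<le> (\<Sum>n\<in>T. (cmod (cf g n))\<^sup>2) + (sqrt \<epsilon>)\<^sup>2"
      by (rule approx_bound) (use T cg in \<open>auto intro: continuous_on_subset\<close>)
    then show ?thesis using T(1) ep0 by auto
  qed
  show "mu m w * integral {0..1} (\<lambda>s. (f s)\<^sup>2) - 2 * mu m w * B \<le> dissipation m (2 * pi * of_int w) f"
  proof -
    have step: "mu m w * e - 2 * mu m w * B \<le> D + mu m w * \<epsilon>" if eps: "\<epsilon> > 0" for \<epsilon>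
    proof -
      obtain T where T: "finite T" "e \<le> (\<Sum>n\<in>T. (cmod (cf f n))\<^sup>2) + \<epsilon>"
        using approx[OF rf per eps] unfolding e_def by blast
      have "(\<Sum>n\<in>T. (cmod (cf f n))\<^sup>2) \<le> (cmod (cf f 0))\<^sup>2 + (cmod (cf f w))\<^sup>2 + (cmod (cf f (- w)))\<^sup>2
           + (\<Sum>n\<in>T - ?K. (cmod (cf f n))\<^sup>2)"
        by (rule K_sum[OF w0 T(1)]) simp
      also have "\<dots> \<le> 0 + B + B + (\<Sum>n\<in>T - ?K. (cmod (cf f n))\<^sup>2)"
        using c0 cw cw' by simp
      finally have "e \<le> 2 * B + (\<Sum>n\<in>T - ?K. (cmod (cf f n))\<^sup>2) + \<epsilon>" using T(2) by simp
      then have "mu m w * e \<le> mu m w * (2 * B + (\<Sum>n\<in>T - ?K. (cmod (cf f n))\<^sup>2) + \<epsilon>)"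
        using mpos by (intro mult_left_mono) auto
      also have "\<dots> = 2 * mu m w * B + mu m w * (\<Sum>n\<in>T - ?K. (cmod (cf f n))\<^sup>2) + mu m w * \<epsilon>"
        by (simp add: algebra_simps)
      also have "\<dots> \<le> 2 * mu m w * B + D + mu m w * \<epsilon>"
        using offK[OF T(1)] bessK[OF T(1)] by simp
      finally show ?thesis by simp
    qed
    have "mu m w * e - 2 * mu m w * B \<le> D"
    proof (rule field_le_epsilon)
      fix \<delta> :: real assume "0 < \<delta>"
      then have "0 < \<delta> / mu m w" using mpos by simp
      from step[OF this] show "mu m w * e - 2 * mu m w * B \<le> D + \<delta>" using mpos by simp
    qed
    then show ?thesis unfolding e_def D_def k_def .
  qed
  assume rle: "r \<le> m + 2"
  define g where "g = (deriv ^^ r) f"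
  have rg: "rsm g" unfolding g_def by (rule rsm_funpow[OF rf])
  have perg: "\<And>s. g (s + 1) = g s" unfolding g_def by (rule perr)
  have cfg2: "(cmod (cf g n))\<^sup>2 = (2 * pi * \<bar>real_of_int n\<bar>) ^ (2 * r) * (cmod (cf f n))\<^sup>2" for n
  proof -
    have "cf g n = (\<i> * of_real (2 * pi * of_int n)) ^ r * cf f n"
      unfolding g_def by (rule cf_funpow[OF rf per])
    then have "cmod (cf g n) = \<bar>2 * pi * real_of_int n\<bar> ^ r * cmod (cf f n)"
      by (simp add: norm_mult norm_power abs_a)
    then show ?thesis unfolding abs_a by (simp add: power_mult_distrib sq_pow)
  qed
  have kpow: "(2 * pi * \<bar>real_of_int w\<bar>) ^ (2 * r) = k ^ (2 * r)"
  proof -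
    have "(2 * pi * \<bar>real_of_int w\<bar>) ^ (2 * r) = \<bar>k\<bar> ^ (2 * r)" unfolding k_def abs_a ..
    also have "\<dots> = k ^ (2 * r)" by (simp add: power_even_abs)
    finally show ?thesis .
  qed
  have step: "integral {0..1} (\<lambda>s. (g s)\<^sup>2) \<le> 4 * (of_int w)^4 * D + 2 * k ^ (2 * r) * B + \<epsilon>" if eps: "\<epsilon> > 0" for \<epsilon>
  proof -
    obtain T where T: "finite T" "integral {0..1} (\<lambda>s. (g s)\<^sup>2) \<le> (\<Sum>n\<in>T. (cmod (cf g n))\<^sup>2) + \<epsilon>"
      using approx[OF rg perg eps] by blast
    have "(\<Sum>n\<in>T. (cmod (cf g n))\<^sup>2) \<le> (cmod (cf g 0))\<^sup>2 + (cmod (cf g w))\<^sup>2 + (cmod (cf g (- w)))\<^sup>2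
         + (\<Sum>n\<in>T - ?K. (cmod (cf g n))\<^sup>2)"
      by (rule K_sum[OF w0 T(1)]) simp
    also have "(cmod (cf g 0))\<^sup>2 + (cmod (cf g w))\<^sup>2 + (cmod (cf g (- w)))\<^sup>2 \<le> 0 + k ^ (2 * r) * B + k ^ (2 * r) * B"
    proof -
      have kn: "0 \<le> k ^ (2 * r)" unfolding power_mult by simp
      have "(cmod (cf g 0))\<^sup>2 = 0" unfolding cfg2 c0 by simp
      moreover have "(cmod (cf g w))\<^sup>2 \<le> k ^ (2 * r) * B"
        unfolding cfg2 kpow using cw kn by (intro mult_left_mono) auto
      moreover have "(cmod (cf g (- w)))\<^sup>2 \<le> k ^ (2 * r) * B"
        using cfg2[of "- w"] kpow cw' kn by (simp add: mult_left_mono)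
      ultimately show ?thesis by linarith
    qed
    also have "(\<Sum>n\<in>T - ?K. (cmod (cf g n))\<^sup>2) \<le> (\<Sum>n\<in>T - ?K. 4 * (of_int w)^4 * (cmod (cf L n))\<^sup>2)"
    proof (rule sum_mono)
      fix n assume "n \<in> T - ?K"
      then have "(2 * pi * \<bar>real_of_int n\<bar>) ^ (2 * r) \<le> 4 * (real_of_int w)^4 * wn m w n"
        using w0 rle by (intro pw_le) auto
      then have "(2 * pi * \<bar>real_of_int n\<bar>) ^ (2 * r) * (cmod (cf f n))\<^sup>2 \<le> 4 * (real_of_int w)^4 * wn m w n * (cmod (cf f n))\<^sup>2"
        by (rule mult_right_mono) simp
      then show "(cmod (cf g n))\<^sup>2 \<le> 4 * (of_int w)^4 * (cmod (cf L n))\<^sup>2"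
        unfolding cfg2 cfL2 by (simp only: mult.assoc)
    qed
    also have "\<dots> = 4 * (of_int w)^4 * (\<Sum>n\<in>T - ?K. (cmod (cf L n))\<^sup>2)"
      by (simp add: sum_distrib_left)
    also have "\<dots> \<le> 4 * (of_int w)^4 * D"
      using bessK[OF T(1)] by (intro mult_left_mono) auto
    finally have X: "(\<Sum>n\<in>T. (cmod (cf g n))\<^sup>2) \<le> 0 + k ^ (2 * r) * B + k ^ (2 * r) * B + 4 * (of_int w)^4 * D" by simp
    then show ?thesis using T(2) by linarith
  qed
  have "integral {0..1} (\<lambda>s. (g s)\<^sup>2) \<le> 4 * (of_int w)^4 * D + 2 * k ^ (2 * r) * B"
    by (rule field_le_epsilon) (rule step)
  then show "integral {0..1} (\<lambda>s. ((deriv ^^ r) f s)\<^sup>2)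
          \<le> 4 * (of_int w)^4 * dissipation m (2 * pi * of_int w) f + 2 * (2 * pi * of_int w) ^ (2 * r) * B"
    unfolding g_def D_def k_def .
qed

lemma phi_sq:
  fixes f :: "real \<Rightarrow> real"
  assumes cf: "continuous_on {0..1} f"
  shows "integral {0..1} (\<lambda>u. (integral {0..u} f)\<^sup>2) \<le> integral {0..1} (\<lambda>s. (f s)\<^sup>2)"
proof -
  define A where "A = integral {0..1} (\<lambda>s. \<bar>f s\<bar>)"
  have cfu: "continuous_on {0..u} f" if "u \<in> {0..1}" for u
    using that by (intro continuous_on_subset[OF cf]) auto
  have bnd: "\<bar>integral {0..u} f\<bar> \<le> A" if u: "u \<in> {0..1}" for u
  proof -
    have j1: "f integrable_on {0..u}" by (rule integrable_continuous_interval[OF cfu[OF u]])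
    have j2: "(\<lambda>s. \<bar>f s\<bar>) integrable_on {0..u}"
      by (intro integrable_continuous_interval continuous_intros cfu[OF u])
    have "\<bar>integral {0..u} f\<bar> \<le> integral {0..u} (\<lambda>s. \<bar>f s\<bar>)"
      using Henstock_Kurzweil_Integration.integral_norm_bound_integral[OF j1 j2] by simp
    also have "\<dots> \<le> A" unfolding A_def
      by (rule integral_subset_le)
         (use u in \<open>auto intro!: integrable_continuous_interval continuous_intros cfu cf\<close>)
    finally show ?thesis .
  qed
  have ic: "continuous_on {0..1} (\<lambda>u. integral {0..u} f)"
    by (rule indefinite_integral_continuous_1) (rule integrable_continuous_interval[OF cf])
  have "integral {0..1} (\<lambda>u. (integral {0..u} f)\<^sup>2) \<le> integral {0..1} (\<lambda>u::real. A\<^sup>2)"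
  proof (rule integral_le)
    show "(\<lambda>u. (integral {0..u} f)\<^sup>2) integrable_on {0..1}"
      by (intro integrable_continuous_interval continuous_intros ic)
    show "(\<lambda>u::real. A\<^sup>2) integrable_on {0..1}"
      by (rule integrable_continuous_interval) (rule continuous_on_const)
    fix u :: real assume "u \<in> {0..1}"
    then have "\<bar>integral {0..u} f\<bar> \<le> A" by (rule bnd)
    then have "\<bar>integral {0..u} f\<bar>\<^sup>2 \<le> A\<^sup>2" by (rule power_mono) simp
    then show "(integral {0..u} f)\<^sup>2 \<le> A\<^sup>2" by simp
  qed
  also have "integral {0..1} (\<lambda>u::real. A\<^sup>2) = A\<^sup>2" by simp
  also have "A\<^sup>2 \<le> integral {0..1} (\<lambda>s. (f s)\<^sup>2)"
  proof -
    have i1: "(\<lambda>s. (f s)\<^sup>2) integrable_on {0..1}" by (intro integrable_continuous_interval continuous_intros cf)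
    have i2: "(\<lambda>s. 2 * A * \<bar>f s\<bar>) integrable_on {0..1}" by (intro integrable_continuous_interval continuous_intros cf)
    have i3: "(\<lambda>s::real. A\<^sup>2) integrable_on {0..1}"
      by (rule integrable_continuous_interval) (rule continuous_on_const)
    have "0 \<le> integral {0..1} (\<lambda>s. (\<bar>f s\<bar> - A)\<^sup>2)"
      by (intro integral_nonneg integrable_continuous_interval continuous_intros cf) auto
    also have "integral {0..1} (\<lambda>s. (\<bar>f s\<bar> - A)\<^sup>2) = integral {0..1} (\<lambda>s. (f s)\<^sup>2 - 2 * A * \<bar>f s\<bar> + A\<^sup>2)"
      by (intro Henstock_Kurzweil_Integration.integral_cong) (simp add: power2_diff power2_abs algebra_simps)
    also have "\<dots> = integral {0..1} (\<lambda>s. (f s)\<^sup>2) - integral {0..1} (\<lambda>s. 2 * A * \<bar>f s\<bar>) + integral {0..1} (\<lambda>s::real. A\<^sup>2)"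
      using i1 i2 i3 by (simp add: integral_add integral_diff integrable_diff)
    also have "integral {0..1} (\<lambda>s. 2 * A * \<bar>f s\<bar>) = 2 * A * A" unfolding A_def by simp
    finally show ?thesis by (simp add: power2_eq_square)
  qed
  finally show ?thesis .
qed

lemma exp_rem: "cmod (exp (\<i> * complex_of_real x) - 1 - \<i> * complex_of_real x) \<le> x\<^sup>2 / 2"
proof -
  have "cmod (iexp x - (\<Sum>k \<le> 1. (\<i> * complex_of_real x)^k / fact k)) \<le> \<bar>x\<bar>^(Suc 1) / fact (Suc 1)"
    by (rule iexp_approx1)
  then show ?thesis by (simp add: power2_abs diff_diff_eq power2_eq_square)
qed

lemma geo:
  fixes \<gamma> :: "real \<Rightarrow> complex" and w :: int
  assumes uc: "unit_length_closed_curve \<gamma>" and w0: "w \<noteq> 0"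
    and tn: "turning_number \<gamma> = real_of_int w"
  defines "k \<equiv> 2 * pi * real_of_int w"
  defines "f \<equiv> (\<lambda>s. signed_curvature \<gamma> s - k)"
  defines "e \<equiv> integral {0..1} (\<lambda>s. (f s)\<^sup>2)"
  shows "cf f 0 = 0" "(cmod (cf f w))\<^sup>2 \<le> k\<^sup>2 * e\<^sup>2 / 4" "(cmod (cf f (- w)))\<^sup>2 \<le> k\<^sup>2 * e\<^sup>2 / 4"
proof -
  have rf: "rsm f" unfolding f_def by (rule rsm_curv[OF uc])
  have cf: "continuous_on S f" for S using rsm_cont[OF rf, of S 0] by simp
  have sc_eq: "signed_curvature \<gamma> = (\<lambda>s. f s + k)" unfolding f_def by auto
  have csc: "continuous_on S (signed_curvature \<gamma>)" for S
    unfolding sc_eq by (intro continuous_intros cf)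
  have int_k: "integral {0..1} (signed_curvature \<gamma>) = k"
    using tn unfolding turning_number_def k_def by (simp add: field_simps)
  have int_f: "integral {0..1} f = 0"
  proof -
    have "integral {0..1} f = integral {0..1} (signed_curvature \<gamma>) - integral {0..1} (\<lambda>s::real. k)"
      unfolding f_def
      by (rule integral_diff) (auto intro!: integrable_continuous_interval csc)
    then show ?thesis using int_k by simp
  qed
  show c0: "cf f 0 = 0"
  proof -
    have "cf f 0 = integral {0..1} (\<lambda>s. complex_of_real (f s))" unfolding cf_def by simp
    also have "\<dots> = of_real (integral {0..1} f)" by (rule integral_of_real_cont[OF cf])
    finally show ?thesis using int_f by simp
  qed
  define \<phi> where "\<phi> u = integral {0..u} f" for u
  have \<phi>d: "(\<phi> has_real_derivative f x) (at x within {0..1})" if "x \<in> {0..1}" for x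
    unfolding \<phi>_def has_real_derivative_iff_has_vector_derivative
    by (rule integral_has_vector_derivative[OF cf that])
  have \<phi>c: "continuous_on {0..1} \<phi>" unfolding \<phi>_def
    by (rule indefinite_integral_continuous_1) (rule integrable_continuous_interval[OF cf])
  have \<phi>0: "\<phi> 0 = 0" unfolding \<phi>_def by simp
  have \<phi>1: "\<phi> 1 = 0" unfolding \<phi>_def using int_f by simp
  have \<phi>i: "(\<phi> has_real_derivative f x) (at x)" if "x \<in> {0<..<1}" for x
  proof -
    have d: "(\<phi> has_real_derivative f x) (at x within {0<..<1})"
      by (rule DERIV_subset[OF \<phi>d]) (use that in auto)
    have eq: "at x within {0<..<1} = at x" by (rule at_within_open) (use that in auto)
    show ?thesis using d unfolding eq .
  qed
  define J where "J = integral {0..1} (\<lambda>s. of_real (\<phi> s) * E w s)"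
  have cfJ: "cf f (- w) = - (\<i> * of_real k) * J"
  proof -
    have "integral {0..1} (\<lambda>s. of_real (f s) * E (- (- w)) s)
       = \<i> * of_real (2 * pi * of_int (- w)) * integral {0..1} (\<lambda>s. of_real (\<phi> s) * E (- (- w)) s)"
      by (rule ibp[OF \<phi>c cf \<phi>i]) (use \<phi>0 \<phi>1 in auto)
    then show ?thesis unfolding cf_def J_def k_def by simp
  qed
  define V1 where "V1 = vderiv 1 \<gamma>"
  define V2 where "V2 = vderiv (Suc 1) \<gamma>"
  have sm: "smooth_curve \<gamma>" by (rule uc_sm[OF uc])
  have vd1: "(V1 has_vector_derivative V2 t) (at t)" for t
    unfolding V1_def V2_def by (rule curve_vd[OF sm])
  have vd0: "(\<gamma> has_vector_derivative V1 t) (at t)" for t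
    using curve_vd[OF sm, of 0 t] unfolding V1_def by simp
  have nV1: "norm (V1 s) = 1" for s unfolding V1_def by (rule uc_norm[OF uc])
  have sc: "signed_curvature \<gamma> s = Re (V1 s) * Im (V2 s) - Im (V1 s) * Re (V2 s)" for s
    using curv_formula[OF nV1[unfolded V1_def]] unfolding V1_def V2_def by (simp add: numeral_2_eq_2)
  have h1: "(Re (V1 s))\<^sup>2 + (Im (V1 s))\<^sup>2 = 1" for s
    using nV1[of s] by (simp add: cmod_power2[symmetric])
  have h2: "Re (V1 s) * Re (V2 s) + Im (V1 s) * Im (V2 s) = 0" for s
  proof -
    have "((\<lambda>t. Re (V1 t) * Re (V1 t) + Im (V1 t) * Im (V1 t)) has_real_derivative
        Re (V2 s) * Re (V1 s) + Re (V2 s) * Re (V1 s) + (Im (V2 s) * Im (V1 s) + Im (V2 s) * Im (V1 s))) (at s)"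
      by (intro DERIV_add DERIV_mult has_field_derivative_Re[OF vd1] has_field_derivative_Im[OF vd1])
    moreover have "(\<lambda>t. Re (V1 t) * Re (V1 t) + Im (V1 t) * Im (V1 t)) = (\<lambda>t. 1)"
      using h1 by (simp add: power2_eq_square)
    ultimately have "((\<lambda>t. 1::real) has_real_derivative
        Re (V2 s) * Re (V1 s) + Re (V2 s) * Re (V1 s) + (Im (V2 s) * Im (V1 s) + Im (V2 s) * Im (V1 s))) (at s)"
      by simp
    then have "Re (V2 s) * Re (V1 s) + Re (V2 s) * Re (V1 s) + (Im (V2 s) * Im (V1 s) + Im (V2 s) * Im (V1 s)) = 0"
      using DERIV_const DERIV_unique by blast
    then show ?thesis by (simp add: algebra_simps)
  qed
  have V2eq: "V2 s = \<i> * of_real (signed_curvature \<gamma> s) * V1 s" for s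
  proof (rule complex_eqI)
    have a: "(Re (V1 s))\<^sup>2 + (Im (V1 s))\<^sup>2 = 1" by (rule h1)
    have b: "Re (V1 s) * Re (V2 s) + Im (V1 s) * Im (V2 s) = 0" by (rule h2)
    show "Re (V2 s) = Re (\<i> * complex_of_real (signed_curvature \<gamma> s) * V1 s)"
      unfolding sc using a b by simp algebra
    show "Im (V2 s) = Im (\<i> * complex_of_real (signed_curvature \<gamma> s) * V1 s)"
      unfolding sc using a b by simp algebra
  qed
  define \<Theta> where "\<Theta> s = k * s + \<phi> s" for s
  have \<Theta>d: "(\<Theta> has_real_derivative signed_curvature \<gamma> x) (at x within {0..1})" if "x \<in> {0..1}" for x
  proof -
    have "(\<Theta> has_real_derivative k * 1 + f x) (at x within {0..1})"
      unfolding \<Theta>_def by (intro DERIV_add DERIV_cmult DERIV_ident \<phi>d that)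
    then show ?thesis unfolding f_def by simp
  qed
  define Z where "Z s = V1 s * exp (- (\<i> * of_real (\<Theta> s)))" for s
  have Zd: "(Z has_vector_derivative 0) (at x within {0..1})" if x: "x \<in> {0..1}" for x
  proof -
    have e1: "((\<lambda>s. exp (- (\<i> * of_real (\<Theta> s)))) has_vector_derivative
        (of_real (signed_curvature \<gamma> x) * (exp (- (\<i> * of_real (\<Theta> x))) * (- \<i>)))) (at x within {0..1})"
    proof -
      have f1: "((\<lambda>s. complex_of_real (\<Theta> s)) has_vector_derivative of_real (signed_curvature \<gamma> x)) (at x within {0..1})"
        by (rule has_vector_derivative_of_real[OF \<Theta>d[OF x]])
      have g1: "((\<lambda>z. exp (- (\<i> * z))) has_field_derivative exp (- (\<i> * of_real (\<Theta> x))) * (- \<i>))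
          (at (of_real (\<Theta> x)) within (\<lambda>s. complex_of_real (\<Theta> s)) ` {0..1})"
        by (auto intro!: derivative_eq_intros)
      from field_vector_diff_chain_within[OF f1 g1] show ?thesis by (simp add: o_def)
    qed
    have "(Z has_vector_derivative (V1 x * (of_real (signed_curvature \<gamma> x) * (exp (- (\<i> * of_real (\<Theta> x))) * (- \<i>)))
          + V2 x * exp (- (\<i> * of_real (\<Theta> x))))) (at x within {0..1})"
      unfolding Z_def by (rule has_vector_derivative_mult[OF has_vector_derivative_at_within[OF vd1] e1])
    moreover have "V1 x * (of_real (signed_curvature \<gamma> x) * (exp (- (\<i> * of_real (\<Theta> x))) * (- \<i>)))
          + V2 x * exp (- (\<i> * of_real (\<Theta> x))) = 0"
      unfolding V2eq by (simp add: algebra_simps)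
    ultimately show ?thesis by simp
  qed
  obtain c where Zc: "\<And>x. x \<in> {0..1} \<Longrightarrow> Z x = c"
    using has_vector_derivative_zero_constant[OF convex_real_interval(5) Zd] by metis
  have \<Theta>0: "\<Theta> 0 = 0" unfolding \<Theta>_def using \<phi>0 by simp
  have cZ: "c = V1 0" using Zc[of 0] unfolding Z_def \<Theta>0 by simp
  have V1eq: "V1 s = V1 0 * exp (\<i> * of_real (\<Theta> s))" if "s \<in> {0..1}" for s
  proof -
    have "V1 s * exp (- (\<i> * of_real (\<Theta> s))) = V1 0" using Zc[OF that] cZ unfolding Z_def by simp
    then have "V1 s * exp (- (\<i> * of_real (\<Theta> s))) * exp (\<i> * of_real (\<Theta> s)) = V1 0 * exp (\<i> * of_real (\<Theta> s))"
      by simp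
    moreover have "exp (- (\<i> * of_real (\<Theta> s))) * exp (\<i> * of_real (\<Theta> s)) = 1"
      using exp_minus_inverse[of "\<i> * of_real (\<Theta> s)"] by (simp add: mult.commute)
    ultimately show ?thesis by (simp add: mult.assoc)
  qed
  have closed: "(V1 has_integral 0) {0..1}"
  proof -
    have "(V1 has_integral (\<gamma> 1 - \<gamma> 0)) {0..1}"
      by (rule fundamental_theorem_of_calculus) (auto intro: has_vector_derivative_at_within[OF vd0])
    moreover have "\<gamma> 1 = \<gamma> 0" using uc_per[OF uc, of 0] by simp
    ultimately show ?thesis by simp
  qed
  have Eexp: "exp (\<i> * of_real (\<Theta> s)) = E w s * exp (\<i> * of_real (\<phi> s))" for s
    unfolding \<Theta>_def E_def k_def by (simp add: exp_add[symmetric] algebra_simps)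
  have \<phi>cc: "continuous_on {0..1} (\<lambda>s. complex_of_real (\<phi> s))" by (intro continuous_intros \<phi>c)
  have int0: "integral {0..1} (\<lambda>s. E w s * exp (\<i> * of_real (\<phi> s))) = 0"
  proof -
    have eqs: "V1 x = V1 0 * (E w x * exp (\<i> * of_real (\<phi> x)))" if "x \<in> {0..1}" for x
      by (simp only: V1eq[OF that] Eexp)
    have "((\<lambda>s. V1 0 * (E w s * exp (\<i> * of_real (\<phi> s)))) has_integral 0) {0..1}"
      using closed has_integral_cong[of "{0..1}" V1 "\<lambda>s. V1 0 * (E w s * exp (\<i> * of_real (\<phi> s)))" 0] eqs
      by blast
    then have "integral {0..1} (\<lambda>s. V1 0 * (E w s * exp (\<i> * of_real (\<phi> s)))) = 0"
      by (rule integral_unique)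
    then have "V1 0 * integral {0..1} (\<lambda>s. E w s * exp (\<i> * of_real (\<phi> s))) = 0" by simp
    moreover have "V1 0 \<noteq> 0" using nV1[of 0] by auto
    ultimately show ?thesis by simp
  qed
  define R where "R s = exp (\<i> * of_real (\<phi> s)) - 1 - \<i> * of_real (\<phi> s)" for s
  have cR: "continuous_on {0..1} (\<lambda>s. E w s * R s)" unfolding R_def
    by (intro continuous_intros \<phi>cc)
  have "integral {0..1} (\<lambda>s. E w s * exp (\<i> * of_real (\<phi> s)))
      = integral {0..1} (\<lambda>s. E w s + (\<i> * (of_real (\<phi> s) * E w s) + E w s * R s))"
    by (intro Henstock_Kurzweil_Integration.integral_cong) (simp add: R_def algebra_simps)
  also have "\<dots> = integral {0..1} (E w) + (\<i> * J + integral {0..1} (\<lambda>s. E w s * R s))"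
  proof -
    have i1: "E w integrable_on {0..1}" by (intro integrable_continuous_interval E_cont)
    have i2: "(\<lambda>s. \<i> * (of_real (\<phi> s) * E w s)) integrable_on {0..1}"
      by (intro integrable_continuous_interval continuous_intros \<phi>cc)
    have i3: "(\<lambda>s. E w s * R s) integrable_on {0..1}" by (intro integrable_continuous_interval cR)
    show ?thesis unfolding J_def
      using i1 i2 i3 by (simp add: integral_add integrable_add)
  qed
  also have "integral {0..1} (E w) = 0" using w0 by (simp add: int_E)
  finally have "\<i> * J + integral {0..1} (\<lambda>s. E w s * R s) = 0" using int0 by simp
  then have "\<i> * J = - integral {0..1} (\<lambda>s. E w s * R s)" by (simp add: eq_neg_iff_add_eq_0)
  then have "cmod J = cmod (integral {0..1} (\<lambda>s. E w s * R s))"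
    by (metis norm_minus_cancel norm_ii norm_mult mult_1)
  also have "\<dots> \<le> integral {0..1} (\<lambda>s. (\<phi> s)\<^sup>2 / 2)"
  proof (rule Henstock_Kurzweil_Integration.integral_norm_bound_integral)
    show "(\<lambda>s. E w s * R s) integrable_on {0..1}" by (intro integrable_continuous_interval cR)
    show "(\<lambda>s. (\<phi> s)\<^sup>2 / 2) integrable_on {0..1}" by (intro integrable_continuous_interval continuous_intros \<phi>c) auto
    fix s :: real assume "s \<in> {0..1}"
    show "norm (E w s * R s) \<le> (\<phi> s)\<^sup>2 / 2" unfolding R_def norm_mult E_norm
      using exp_rem[of "\<phi> s"] by simp
  qed
  also have "\<dots> = integral {0..1} (\<lambda>s. (\<phi> s)\<^sup>2) / 2" by simp
  also have "\<dots> \<le> e / 2"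
    using phi_sq[OF cf] unfolding e_def \<phi>_def by simp
  finally have Jb: "cmod J \<le> e / 2" .
  have cfm: "cmod (cf f (- w)) = \<bar>k\<bar> * cmod J"
    unfolding cfJ by (simp add: norm_mult)
  have "cmod (cf f (- w)) \<le> \<bar>k\<bar> * (e / 2)"
    unfolding cfm using Jb by (intro mult_left_mono) auto
  then have "(cmod (cf f (- w)))\<^sup>2 \<le> (\<bar>k\<bar> * (e / 2))\<^sup>2" by (intro power_mono) auto
  moreover have "(\<bar>k\<bar> * (e / 2))\<^sup>2 = k\<^sup>2 * e\<^sup>2 / 4" by (simp add: power_mult_distrib power_divide)
  ultimately show sq1: "(cmod (cf f (- w)))\<^sup>2 \<le> k\<^sup>2 * e\<^sup>2 / 4" by simp
  have "cf f w = cnj (cf f (- w))"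
    unfolding cf_def integral_cnj by (simp add: E_cnj)
  then show "(cmod (cf f w))\<^sup>2 \<le> k\<^sup>2 * e\<^sup>2 / 4" using sq1 by simp
qed

theorem mainTheorem14:
  fixes m :: nat and \<omega> :: int
  assumes "m \<ge> 1" and "\<omega> \<noteq> 0"
  shows "mu m \<omega> > 0 \<and>
    (\<exists>C :: real. \<exists>Cr :: nat \<Rightarrow> real.
      \<forall>\<gamma>. unit_length_closed_curve \<gamma> \<and> turning_number \<gamma> = real_of_int \<omega> \<longrightarrow>
        (let \<kappa> = 2 * pi * real_of_int \<omega>;
             f = (\<lambda>s. signed_curvature \<gamma> s - \<kappa>);
             e = integral {0..1} (\<lambda>s. (f s)\<^sup>2)
         in dissipation m \<kappa> f \<ge> mu m \<omega> * e - C * e\<^sup>2 \<and>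
            (\<forall>r \<le> m + 2. integral {0..1} (\<lambda>s. ((deriv ^^ r) f s)\<^sup>2)
                            \<le> Cr r * (dissipation m \<kappa> f + e\<^sup>2))))"
proof -
  have w0: "\<omega> \<noteq> 0" by (rule assms(2))
  have mpos: "mu m \<omega> > 0" by (rule mu_pos[OF w0])
  define k where "k = 2 * pi * real_of_int \<omega>"
  define C where "C = mu m \<omega> * k\<^sup>2 / 2"
  define Cr where "Cr r = 4 * (real_of_int \<omega>)^4 + k ^ (2 * r) * k\<^sup>2 / 2" for r
  have main: "dissipation m k f \<ge> mu m \<omega> * e - C * e\<^sup>2 \<and>
            (\<forall>r \<le> m + 2. integral {0..1} (\<lambda>s. ((deriv ^^ r) f s)\<^sup>2)
                            \<le> Cr r * (dissipation m k f + e\<^sup>2))"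
    if uc: "unit_length_closed_curve \<gamma>" and tn: "turning_number \<gamma> = real_of_int \<omega>"
      and fdef: "f = (\<lambda>s. signed_curvature \<gamma> s - k)" and edef: "e = integral {0..1} (\<lambda>s. (f s)\<^sup>2)"
    for \<gamma> f e
  proof -
    note G = geo[OF uc w0 tn]
    have rf: "rsm f" unfolding fdef by (rule rsm_curv[OF uc])
    have per: "f (s + 1) = f s" for s unfolding fdef using curv_periodic[OF uc] by simp
    have c0: "cf f 0 = 0" using G(1) unfolding fdef k_def .
    have cw: "(cmod (cf f \<omega>))\<^sup>2 \<le> k\<^sup>2 * e\<^sup>2 / 4" using G(2) unfolding fdef edef k_def .
    have cw': "(cmod (cf f (- \<omega>)))\<^sup>2 \<le> k\<^sup>2 * e\<^sup>2 / 4" using G(3) unfolding fdef edef k_def .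
    note S = spectral[OF rf per w0 c0 cw cw', where m = m]
    have Dnn: "0 \<le> dissipation m k f"
      unfolding dissipation_def
      by (cases "(\<lambda>s. ((deriv ^^ m) (\<lambda>t. (deriv ^^ 2) f t + k\<^sup>2 * f t) s)\<^sup>2) integrable_on {0..1}")
         (auto intro: integral_nonneg simp: not_integrable_integral)
    have part1: "dissipation m k f \<ge> mu m \<omega> * e - C * e\<^sup>2"
    proof -
      have X: "mu m \<omega> * e - 2 * mu m \<omega> * (k\<^sup>2 * e\<^sup>2 / 4) \<le> dissipation m k f"
        using S(1) unfolding edef k_def .
      have Y: "2 * mu m \<omega> * (k\<^sup>2 * e\<^sup>2 / 4) = C * e\<^sup>2" unfolding C_def by (simp add: field_simps)
      show ?thesis using X Y by linarith
    qed
    have part2: "integral {0..1} (\<lambda>s. ((deriv ^^ r) f s)\<^sup>2) \<le> Cr r * (dissipation m k f + e\<^sup>2)"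
      if r: "r \<le> m + 2" for r
    proof -
      have "integral {0..1} (\<lambda>s. ((deriv ^^ r) f s)\<^sup>2) \<le> 4 * (real_of_int \<omega>)^4 * dissipation m k f + 2 * k ^ (2 * r) * (k\<^sup>2 * e\<^sup>2 / 4)"
        using S(2)[where r = r, OF r] unfolding k_def .
      also have "\<dots> = 4 * (real_of_int \<omega>)^4 * dissipation m k f + (k ^ (2 * r) * k\<^sup>2 / 2) * e\<^sup>2"
        by (simp add: field_simps)
      also have "\<dots> \<le> Cr r * (dissipation m k f + e\<^sup>2)"
      proof -
        have a: "0 \<le> k ^ (2 * r) * k\<^sup>2 / 2" unfolding power_mult by simp
        have b: "0 \<le> 4 * (real_of_int \<omega>)^4" by simp
        have "Cr r * (dissipation m k f + e\<^sup>2) = 4 * (real_of_int \<omega>)^4 * dissipation m k f + (k ^ (2 * r) * k\<^sup>2 / 2) * e\<^sup>2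
           + ((k ^ (2 * r) * k\<^sup>2 / 2) * dissipation m k f + 4 * (real_of_int \<omega>)^4 * e\<^sup>2)"
          unfolding Cr_def by (simp add: algebra_simps)
        moreover have "0 \<le> (k ^ (2 * r) * k\<^sup>2 / 2) * dissipation m k f" using a Dnn by simp
        moreover have "0 \<le> 4 * (real_of_int \<omega>)^4 * e\<^sup>2" using b by simp
        ultimately show ?thesis by linarith
      qed
      finally show ?thesis .
    qed
    show ?thesis using part1 part2 by blast
  qed
  show ?thesis
  proof (intro conjI exI allI impI)
    show "mu m \<omega> > 0" by (rule mpos)
    fix \<gamma> assume h: "unit_length_closed_curve \<gamma> \<and> turning_number \<gamma> = real_of_int \<omega>"
    show "let \<kappa> = 2 * pi * real_of_int \<omega>;
             f = (\<lambda>s. signed_curvature \<gamma> s - \<kappa>);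
             e = integral {0..1} (\<lambda>s. (f s)\<^sup>2)
         in dissipation m \<kappa> f \<ge> mu m \<omega> * e - C * e\<^sup>2 \<and>
            (\<forall>r \<le> m + 2. integral {0..1} (\<lambda>s. ((deriv ^^ r) f s)\<^sup>2)
                            \<le> Cr r * (dissipation m \<kappa> f + e\<^sup>2))"
      unfolding Let_def k_def[symmetric]
      by (rule main) (use h in auto)
  qed
qed

end
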